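(* Let $T$ be any staircase transformation on $[0,1)$, let $f$ be a $2$-wise constant roof function whose two height values are rationally independent, and let $\phi_t$ be the suspension flow built under $f$ over $T$. Then $\phi_t$ is a rank-one flow.
   Context: Staircase construction: fix a cutting sequence $(r_n)$ and initial interval $J=[0,a)$ (column $C_0$, height $1$). Column $C_n$ is obtained from $C_{n-1}$ (stacked equal-length intervals, the levels) by cutting into $r_n$ equal-width subcolumns, placing $i-1$ spacer intervals of the same width (taken consecutively from $[a,\infty)$) on the $i$-th subcolumn, and stacking the $(i+1)$-th subcolumn on the $i$-th; $T$ maps each non-top level by translation onto the level above; $a$ is chosen so that $J$ plus all spacers has total length $1$. $[0,a)$ is the non-spacer part, $[a,1)$ the spacer part. A $2$-wise constant function: $f$ takes two rationally independent values $p>q>0$, with $f=p$ on the non-spacer part and $f=q$ on the spacer part. Suspension flow: $X=\{(x,y):0\le y<f(x)\}$ with normalized Lebesgue measure $\mu$; points move up at unit speed and a point reaching $(x,f(x))$ jumps to $(T(x),0)$. A measure-preserving flow $\phi_t$ on a probability space $(X,\mathcal B,\mu)$ is rank-one if there exist measurable sets $A_n$, a decreasing sequence of times $t_n$ and an increasing sequence of integers $h_n$ such that: (1) $t_n\to0$; (2) $h_nt_n\to\infty$; (3) $\mu(\phi_{k_1t_n}A_n\cap\phi_{k_2t_n}A_n)=0$ for all distinct $k_1,k_2\in\{0,\dots,h_n-1\}$; (4) $\mu\big(X\setminus\bigcup_{k=0}^{h_n-1}\phi_{kt_n}(A_n)\big)\to0$ as $n\to\infty$. *)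

theory Defs
  imports "HOL-Analysis.Analysis"
begin

text \<open>Cutting sequence r: stage n (n >= 1) cuts into r n subcolumns.
  P r n = r 1 * ... * r n.\<close>
definition cut_prod :: "(nat \<Rightarrow> nat) \<Rightarrow> nat \<Rightarrow> nat" where
  "cut_prod r n = (\<Prod>k\<in>{1..n}. r k)"

text \<open>Height of column C_n (C_0 has height 1); the i-th subcolumn (1-indexed)
  receives i-1 spacers, so r_n (r_n - 1)/2 spacers are added at stage n.\<close>
primrec stair_height :: "(nat \<Rightarrow> nat) \<Rightarrow> nat \<Rightarrow> nat" where
  "stair_height r 0 = 1"
| "stair_height r (Suc n) =
     r (Suc n) * stair_height r n + r (Suc n) * (r (Suc n) - 1) div 2"

text \<open>Total spacer length measured in units of a (the length of J=[0,a)).\<close>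
definition stair_spacer_sum :: "(nat \<Rightarrow> nat) \<Rightarrow> real" where
  "stair_spacer_sum r =
     (\<Sum>n. real (r (Suc n) * (r (Suc n) - 1) div 2) / real (cut_prod r (Suc n)))"

text \<open>a is chosen so that J plus all spacers has total length 1.\<close>
definition stair_a :: "(nat \<Rightarrow> nat) \<Rightarrow> real" where
  "stair_a r = 1 / (1 + stair_spacer_sum r)"

definition stair_width :: "(nat \<Rightarrow> nat) \<Rightarrow> nat \<Rightarrow> real" where
  "stair_width r n = stair_a r / real (cut_prod r n)"

text \<open>Left end of the part of [a,1) from which the spacers of stage n are taken
  (spacers are taken consecutively: first those of stage 1, then stage 2, ...).\<close>
definition stair_spacer_start :: "(nat \<Rightarrow> nat) \<Rightarrow> nat \<Rightarrow> real" where
  "stair_spacer_start r n = stair_a r +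
     (\<Sum>k\<in>{1..<n}. stair_width r k * real (r k * (r k - 1) div 2))"

text \<open>Position (from the bottom, 0-indexed) in C_n at which the block formed by
  the (i+1)-th subcolumn together with its i spacers starts.\<close>
definition block_start :: "(nat \<Rightarrow> nat) \<Rightarrow> nat \<Rightarrow> nat \<Rightarrow> nat" where
  "block_start r n i = i * stair_height r n + i * (i - 1) div 2"

text \<open>Left endpoint of level j (0-indexed from the bottom) of column C_n.
  Level j of C_(n+1) lies in block i (the (i+1)-th subcolumn of C_n with its
  i spacers on top); at offset p inside the block it is either the (i+1)-th
  piece of level p of C_n, or the (p - h_n)-th spacer placed on that
  subcolumn.  Within stage n+1 spacers are taken consecutively in stacking
  order (bottom to top).\<close>
primrec stair_level :: "(nat \<Rightarrow> nat) \<Rightarrow> nat \<Rightarrow> nat \<Rightarrow> real" where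
  "stair_level r 0 = (\<lambda>j. 0)"
| "stair_level r (Suc n) = (\<lambda>j.
     let i = (LEAST i. j < block_start r n (Suc i));
         p = j - block_start r n i
     in if p < stair_height r n
        then stair_level r n p + real i * stair_width r (Suc n)
        else stair_spacer_start r (Suc n) +
             stair_width r (Suc n) * real (i * (i - 1) div 2 + (p - stair_height r n)))"

definition in_stair_level :: "(nat \<Rightarrow> nat) \<Rightarrow> nat \<Rightarrow> nat \<Rightarrow> real \<Rightarrow> bool" where
  "in_stair_level r n j x \<longleftrightarrow>
     j < stair_height r n \<and> stair_level r n j \<le> x \<and> x < stair_level r n j + stair_width r n"

text \<open>The staircase transformation: a point in a non-top level of some column
  is translated onto the level above (this is independent of the column used);
  on the remaining null set it is (arbitrarily) set to be the identity.\<close>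
definition staircase_T :: "(nat \<Rightarrow> nat) \<Rightarrow> real \<Rightarrow> real" where
  "staircase_T r x =
     (if \<exists>n j. Suc j < stair_height r n \<and> in_stair_level r n j x
      then (let (n, j) = (SOME (n, j). Suc j < stair_height r n \<and> in_stair_level r n j x)
            in x - stair_level r n j + stair_level r n (Suc j))
      else x)"

text \<open>Admissible cutting sequences: r n >= 2 at every stage, and the total spacer
  length is finite (so that the construction lives on [0,1)).\<close>
definition staircase_seq :: "(nat \<Rightarrow> nat) \<Rightarrow> bool" where
  "staircase_seq r \<longleftrightarrow> (\<forall>n\<ge>1. 2 \<le> r n) \<and>
     summable (\<lambda>n. real (r (Suc n) * (r (Suc n) - 1) div 2) / real (cut_prod r (Suc n)))"

definition two_wise_roof :: "(nat \<Rightarrow> nat) \<Rightarrow> real \<Rightarrow> real \<Rightarrow> real \<Rightarrow> real" where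
  "two_wise_roof r p q x = (if x < stair_a r then p else q)"

definition rationally_independent :: "real \<Rightarrow> real \<Rightarrow> bool" where
  "rationally_independent p q \<longleftrightarrow>
     (\<forall>m n :: int. real_of_int m * p + real_of_int n * q = 0 \<longrightarrow> m = 0 \<and> n = 0)"

definition susp_space :: "(real \<Rightarrow> real) \<Rightarrow> (real \<times> real) set" where
  "susp_space f = {(x, y). 0 \<le> x \<and> x < 1 \<and> 0 \<le> y \<and> y < f x}"

definition susp_measure :: "(real \<Rightarrow> real) \<Rightarrow> (real \<times> real) measure" where
  "susp_measure f = uniform_measure lborel (susp_space f)"

definition birkhoff_sum :: "(real \<Rightarrow> real) \<Rightarrow> (real \<Rightarrow> real) \<Rightarrow> nat \<Rightarrow> real \<Rightarrow> real" where
  "birkhoff_sum T f n x = (\<Sum>k<n. f ((T ^^ k) x))"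

text \<open>Suspension flow (for t >= 0): move up at unit speed; on reaching the roof
  jump from (x, f x) to (T x, 0).  After time t the point (x,y) has made n jumps,
  where n is least with y + t < f x + ... + f (T^n x).\<close>
definition susp_flow :: "(real \<Rightarrow> real) \<Rightarrow> (real \<Rightarrow> real) \<Rightarrow> real \<Rightarrow> real \<times> real \<Rightarrow> real \<times> real" where
  "susp_flow T f t z =
     (let x = fst z; y = snd z;
          n = (LEAST n. y + t < birkhoff_sum T f (Suc n) x)
      in ((T ^^ n) x, y + t - birkhoff_sum T f n x))"

definition measure_preserving_map :: "'a measure \<Rightarrow> ('a \<Rightarrow> 'a) \<Rightarrow> bool" where
  "measure_preserving_map M g \<longleftrightarrow> g \<in> measurable M M \<and> distr M M g = M"

text \<open>A measure-preserving flow (given for times t >= 0) on a probability space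
  which is rank-one.  The images of A_n under the flow are required to be
  measurable, so that their measures make sense.\<close>
definition rank_one_flow :: "'a measure \<Rightarrow> (real \<Rightarrow> 'a \<Rightarrow> 'a) \<Rightarrow> bool" where
  "rank_one_flow M \<phi> \<longleftrightarrow>
     emeasure M (space M) = 1 \<and>
     (\<forall>t\<ge>0. measure_preserving_map M (\<phi> t)) \<and>
     (AE z in M. \<phi> 0 z = z) \<and>
     (\<forall>s\<ge>0. \<forall>t\<ge>0. AE z in M. \<phi> (s + t) z = \<phi> s (\<phi> t z)) \<and>
     (\<exists>(A :: nat \<Rightarrow> 'a set) (t :: nat \<Rightarrow> real) (h :: nat \<Rightarrow> nat).
        (\<forall>n. A n \<in> sets M) \<and>
        decseq t \<and> incseq h \<and>
        t \<longlonglongrightarrow> 0 \<and>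
        filterlim (\<lambda>n. real (h n) * t n) at_top sequentially \<and>
        (\<forall>n. \<forall>k<h n. \<phi> (real k * t n) ` A n \<in> sets M) \<and>
        (\<forall>n k1 k2. k1 < h n \<and> k2 < h n \<and> k1 \<noteq> k2 \<longrightarrow>
           measure M (\<phi> (real k1 * t n) ` A n \<inter> \<phi> (real k2 * t n) ` A n) = 0) \<and>
        (\<lambda>n. measure M (space M - (\<Union>k<h n. \<phi> (real k * t n) ` A n))) \<longlonglongrightarrow> 0)"

end

theory Submission
  imports Defs
begin
lemma tri_Suc: "Suc i * i div 2 = i * (i - 1) div 2 + (i::nat)"
proof -
  have "Suc i * i = i * (i - 1) + 2 * i" by (cases i) (auto simp: algebra_simps)
  moreover have "even (i * (i - 1))" by (cases i) auto
  then obtain k where "i * (i - 1) = 2 * k" by (rule evenE)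
  ultimately show ?thesis by simp
qed

lemma bs_Suc: "block_start r n (Suc i) = block_start r n i + stair_height r n + i"
  unfolding block_start_def using tri_Suc[of i] by (simp add: algebra_simps)

lemma bs_mono: "i \<le> i' \<Longrightarrow> block_start r n i \<le> block_start r n i'"
proof (induction i' rule: dec_induct)
  case (step k) then show ?case using bs_Suc[of r n k] by simp
qed simp

lemma bs_strict: "i < i' \<Longrightarrow> block_start r n i + stair_height r n + i \<le> block_start r n i'"
  using bs_mono[of "Suc i" i' r n] bs_Suc[of r n i] by simp

lemma h_Suc_bs: "stair_height r (Suc n) = block_start r n (r (Suc n))"
  by (simp add: block_start_def mult.commute)

lemma least_bs:
  assumes "p < stair_height r n + i"
  shows "(LEAST i'. block_start r n i + p < block_start r n (Suc i')) = i"
proof (rule Least_equality)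
  show "block_start r n i + p < block_start r n (Suc i)" using assms bs_Suc[of r n i] by simp
next
  fix y assume "block_start r n i + p < block_start r n (Suc y)"
  then show "i \<le> y" using bs_mono[of "Suc y" i r n] by (cases "i \<le> y") auto
qed

lemma decomp_exists:
  assumes "j < stair_height r (Suc n)" "1 \<le> r (Suc n)"
  shows "\<exists>i p. i < r (Suc n) \<and> p < stair_height r n + i \<and> j = block_start r n i + p"
proof -
  define R where "R = r (Suc n)"
  have ex: "j < block_start r n (Suc (R - 1))" using assms h_Suc_bs[of r n] unfolding R_def by simp
  define i where "i = (LEAST i. j < block_start r n (Suc i))"
  have i1: "j < block_start r n (Suc i)" unfolding i_def by (rule LeastI[of "\<lambda>i. j < block_start r n (Suc i)", OF ex])
  have iR: "i \<le> R - 1" unfolding i_def by (rule Least_le[of "\<lambda>i. j < block_start r n (Suc i)", OF ex])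
  have i2: "block_start r n i \<le> j"
  proof (cases i)
    case 0 then show ?thesis by (simp add: block_start_def)
  next
    case (Suc i0)
    have "\<not> j < block_start r n (Suc i0)"
      using not_less_Least[of i0 "\<lambda>i. j < block_start r n (Suc i)"] Suc unfolding i_def by simp
    then show ?thesis using Suc by simp
  qed
  have "R \<ge> 1" using assms(2) unfolding R_def .
  then have a1: "i < r (Suc n)" using iR unfolding R_def by linarith
  have a2: "j - block_start r n i < stair_height r n + i" using i1 i2 bs_Suc[of r n i] by linarith
  have a3: "j = block_start r n i + (j - block_start r n i)" using i2 by simp
  show ?thesis using a1 a2 a3 by blast
qed

lemma level_ns:
  assumes "p < stair_height r n"
  shows "stair_level r (Suc n) (block_start r n i + p) = stair_level r n p + real i * stair_width r (Suc n)"
  using assms least_bs[of p r n i] by (simp add: Let_def)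

lemma level_sp:
  assumes "stair_height r n \<le> p" "p < stair_height r n + i"
  shows "stair_level r (Suc n) (block_start r n i + p) =
     stair_spacer_start r (Suc n) + stair_width r (Suc n) * real (i * (i - 1) div 2 + (p - stair_height r n))"
  using assms least_bs[of p r n i] by (simp add: Let_def)

lemma tri_bound:
  fixes i R d :: nat
  assumes "i < R" "d < i"
  shows "i * (i - 1) div 2 + d + 1 \<le> R * (R - 1) div 2"
proof -
  have "i * (i - 1) div 2 + d + 1 \<le> Suc i * i div 2" using tri_Suc[of i] assms by simp
  also have "Suc i * i \<le> R * (R - 1)" using assms by (intro mult_mono) auto
  then have "Suc i * i div 2 \<le> R * (R - 1) div 2" by (rule div_le_mono)
  finally show ?thesis .
qed

lemma tri_disj:
  fixes i1 i2 d1 d2 :: nat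
  assumes "d1 < i1" "d2 < i2" "(i1, d1) \<noteq> (i2, d2)"
  shows "i1 * (i1 - 1) div 2 + d1 \<noteq> i2 * (i2 - 1) div 2 + d2"
proof
  assume eq: "i1 * (i1 - 1) div 2 + d1 = i2 * (i2 - 1) div 2 + d2"
  have mono: "Suc i * i div 2 \<le> i' * (i' - 1) div 2" if "i < i'" for i i' :: nat
  proof -
    have "Suc i * i \<le> i' * (i' - 1)" using that by (intro mult_mono) auto
    then show ?thesis by (rule div_le_mono)
  qed
  show False
  proof (cases i1 i2 rule: linorder_cases)
    case less
    then show ?thesis using mono[OF less] tri_Suc[of i1] assms eq by linarith
  next
    case equal then show ?thesis using assms eq by simp
  next
    case greater
    then show ?thesis using mono[OF greater] tri_Suc[of i2] assms eq by linarith
  qed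
qed

context
  fixes r :: "nat \<Rightarrow> nat"
  assumes sc: "staircase_seq r"
begin

lemma r_ge2: "n \<ge> 1 \<Longrightarrow> 2 \<le> r n"
  using sc unfolding staircase_seq_def by auto

lemma r_Suc_ge2: "2 \<le> r (Suc n)" using r_ge2 by simp

lemma summ: "summable (\<lambda>n. real (r (Suc n) * (r (Suc n) - 1) div 2) / real (cut_prod r (Suc n)))"
  using sc unfolding staircase_seq_def by auto

lemma cut_prod_Suc: "cut_prod r (Suc n) = cut_prod r n * r (Suc n)"
  unfolding cut_prod_def by (simp add: prod.cl_ivl_Suc)

lemma cut_prod_pos: "cut_prod r n > 0"
  by (induction n) (auto simp: cut_prod_Suc, simp add: cut_prod_def, metis r_Suc_ge2 not_numeral_le_zero neq0_conv)

lemma spacer_sum_nonneg: "stair_spacer_sum r \<ge> 0"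
  unfolding stair_spacer_sum_def by (rule suminf_nonneg[OF summ]) simp

lemma a_pos: "stair_a r > 0"
  unfolding stair_a_def using spacer_sum_nonneg by simp

lemma a_le1: "stair_a r \<le> 1"
  unfolding stair_a_def using spacer_sum_nonneg by simp

lemma w_pos: "stair_width r n > 0"
  unfolding stair_width_def using a_pos cut_prod_pos[of n] by simp

lemma w_Suc: "stair_width r n = real (r (Suc n)) * stair_width r (Suc n)"
  unfolding stair_width_def cut_prod_Suc using r_Suc_ge2[of n] cut_prod_pos[of n] by simp

lemma s_1: "stair_spacer_start r 1 = stair_a r"
  unfolding stair_spacer_start_def by simp

lemma s_Suc: "stair_spacer_start r (Suc (Suc n)) =
   stair_spacer_start r (Suc n) + stair_width r (Suc n) * real (r (Suc n) * (r (Suc n) - 1) div 2)"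
  unfolding stair_spacer_start_def by simp

lemma s_ge_a: "stair_spacer_start r (Suc n) \<ge> stair_a r"
proof (induction n)
  case 0 then show ?case using s_1 by simp
next
  case (Suc n) then show ?case using s_Suc[of n] w_pos[of "Suc n"] by (simp add: add_increasing2)
qed

lemma s_mono_Suc: "stair_spacer_start r (Suc n) \<le> stair_spacer_start r (Suc (Suc n))"
  using s_Suc[of n] w_pos[of "Suc n"] by simp

lemma h_pos: "stair_height r n \<ge> 1"
proof (induction n)
  case (Suc n)
  have "stair_height r (Suc n) \<ge> r (Suc n) * stair_height r n" by simp
  moreover have "r (Suc n) * stair_height r n \<ge> 1" using Suc r_Suc_ge2[of n] by (simp add: Suc_le_eq)
  ultimately show ?case by linarith
qed simp

lemma h_ge: "stair_height r n \<ge> Suc n"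
proof (induction n)
  case (Suc n)
  have "stair_height r (Suc n) \<ge> r (Suc n) * stair_height r n" by simp
  moreover have "r (Suc n) * stair_height r n \<ge> 2 * stair_height r n" using r_Suc_ge2[of n] by simp
  ultimately show ?case using Suc h_pos[of n] by linarith
qed simp

lemma inv:
  "j < stair_height r n \<Longrightarrow> 0 \<le> stair_level r n j \<and>
     stair_level r n j + stair_width r n \<le> stair_spacer_start r (Suc n) \<and>
     (stair_level r n j + stair_width r n \<le> stair_a r \<or> stair_a r \<le> stair_level r n j)"
proof (induction n arbitrary: j)
  case 0
  have "stair_spacer_start r (Suc 0) = stair_a r" using s_1 by simp
  then show ?case using 0 by (simp add: stair_width_def cut_prod_def)
next
  case (Suc n)
  let ?w = "stair_width r (Suc n)" and ?R = "r (Suc n)"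
  have R1: "1 \<le> ?R" using r_Suc_ge2[of n] by simp
  obtain i p where ip: "i < ?R" "p < stair_height r n + i" "j = block_start r n i + p"
    using decomp_exists[OF Suc.prems R1] by blast
  have wpos: "?w > 0" using w_pos by simp
  show ?case
  proof (cases "p < stair_height r n")
    case True
    have L: "stair_level r (Suc n) j = stair_level r n p + real i * ?w"
      using level_ns[OF True] ip(3) by simp
    note IH = Suc.IH[OF True]
    have "real i * ?w + ?w \<le> real ?R * ?w"
    proof -
      have "real i + 1 \<le> real ?R" using ip(1) by linarith
      then have "(real i + 1) * ?w \<le> real ?R * ?w" using wpos by (intro mult_right_mono) auto
      then show ?thesis by (simp add: algebra_simps)
    qed
    then have B: "stair_level r (Suc n) j + ?w \<le> stair_level r n p + stair_width r n"
      using L w_Suc[of n] by simp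
    have "real i * ?w \<ge> 0" using wpos by simp
    then show ?thesis using IH B L s_mono_Suc[of n] by linarith
  next
    case False
    define k where "k = i * (i - 1) div 2 + (p - stair_height r n)"
    have L: "stair_level r (Suc n) j = stair_spacer_start r (Suc n) + ?w * real k"
      using level_sp[of r n p i] False ip unfolding k_def by simp
    have "k + 1 \<le> ?R * (?R - 1) div 2" unfolding k_def
      using tri_bound[of i ?R "p - stair_height r n"] ip False by simp
    then have "real k + 1 \<le> real (?R * (?R - 1) div 2)" by linarith
    then have "?w * (real k + 1) \<le> ?w * real (?R * (?R - 1) div 2)"
      using wpos by (intro mult_left_mono) auto
    then have "?w * real k + ?w \<le> ?w * real (?R * (?R - 1) div 2)"
      by (simp add: distrib_left)
    then have B: "stair_level r (Suc n) j + ?w \<le> stair_spacer_start r (Suc (Suc n))"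
      using L s_Suc[of n] by simp
    have "?w * real k \<ge> 0" using wpos by simp
    then have "stair_a r \<le> stair_level r (Suc n) j" using L s_ge_a[of n] by linarith
    then show ?thesis using B a_pos by linarith
  qed
qed

end

context
  fixes r :: "nat \<Rightarrow> nat"
  assumes sc: "staircase_seq r"
begin

lemma piece_ns:
  assumes "i < r (Suc n)" "p < stair_height r n"
  shows "stair_level r n p \<le> stair_level r (Suc n) (block_start r n i + p) \<and>
    stair_level r (Suc n) (block_start r n i + p) + stair_width r (Suc n) \<le> stair_level r n p + stair_width r n"
proof -
  let ?w = "stair_width r (Suc n)" and ?R = "r (Suc n)"
  have wpos: "?w > 0" using w_pos[OF sc] by simp
  have L: "stair_level r (Suc n) (block_start r n i + p) = stair_level r n p + real i * ?w"
    using level_ns[OF assms(2)] by simp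
  have "real i + 1 \<le> real ?R" using assms(1) by linarith
  then have "(real i + 1) * ?w \<le> real ?R * ?w" using wpos by (intro mult_right_mono) auto
  then have "real i * ?w + ?w \<le> real ?R * ?w" by (simp add: algebra_simps)
  moreover have "real i * ?w \<ge> 0" using wpos by simp
  ultimately show ?thesis using L w_Suc[OF sc, of n] by simp
qed

lemma disj:
  "j1 < stair_height r n \<Longrightarrow> j2 < stair_height r n \<Longrightarrow> j1 \<noteq> j2 \<Longrightarrow>
   stair_level r n j1 + stair_width r n \<le> stair_level r n j2 \<or>
   stair_level r n j2 + stair_width r n \<le> stair_level r n j1"
proof (induction n arbitrary: j1 j2)
  case 0 then show ?case by simp
next
  case (Suc n)
  let ?w = "stair_width r (Suc n)" and ?R = "r (Suc n)" and ?h = "stair_height r n"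
  let ?L = "stair_level r (Suc n)" and ?s = "stair_spacer_start r (Suc n)"
  have wpos: "?w > 0" using w_pos[OF sc] by simp
  have R1: "1 \<le> ?R" using r_Suc_ge2[OF sc, of n] by simp
  obtain i1 p1 where ip1: "i1 < ?R" "p1 < ?h + i1" "j1 = block_start r n i1 + p1"
    using decomp_exists[OF Suc.prems(1) R1] by blast
  obtain i2 p2 where ip2: "i2 < ?R" "p2 < ?h + i2" "j2 = block_start r n i2 + p2"
    using decomp_exists[OF Suc.prems(2) R1] by blast
  have sp_ge: "?s \<le> ?L (block_start r n i + p)" if "?h \<le> p" "p < ?h + i" for i p
  proof -
    have "?L (block_start r n i + p) = ?s + ?w * real (i * (i - 1) div 2 + (p - ?h))"
      using level_sp[OF that] .
    moreover have "?w * real (i * (i - 1) div 2 + (p - ?h)) \<ge> 0" using wpos by simp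
    ultimately show ?thesis by linarith
  qed
  have ns_le: "?L (block_start r n i + p) + ?w \<le> ?s" if "i < ?R" "p < ?h" for i p
    using piece_ns[OF that] inv[OF sc that(2)] by linarith
  show ?case
  proof (cases "p1 < ?h")
    case T1: True
    show ?thesis
    proof (cases "p2 < ?h")
      case T2: True
      show ?thesis
      proof (cases "p1 = p2")
        case True
        then have "i1 \<noteq> i2" using Suc.prems(3) ip1 ip2 by auto
        have L1: "?L j1 = stair_level r n p1 + real i1 * ?w" using level_ns[OF T1] ip1 by simp
        have L2: "?L j2 = stair_level r n p1 + real i2 * ?w" using level_ns[OF T2] ip2 True by simp
        show ?thesis
        proof (cases "i1 < i2")
          case True
          then have "real i1 + 1 \<le> real i2" by linarith
          then have "(real i1 + 1) * ?w \<le> real i2 * ?w" using wpos by (intro mult_right_mono) auto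
          then show ?thesis using L1 L2 by (simp add: algebra_simps)
        next
          case False
          then have "real i2 + 1 \<le> real i1" using \<open>i1 \<noteq> i2\<close> by linarith
          then have "(real i2 + 1) * ?w \<le> real i1 * ?w" using wpos by (intro mult_right_mono) auto
          then show ?thesis using L1 L2 by (simp add: algebra_simps)
        qed
      next
        case False
        note IH = Suc.IH[OF T1 T2 False]
        show ?thesis unfolding ip1(3) ip2(3) using IH piece_ns[OF ip1(1) T1] piece_ns[OF ip2(1) T2] by linarith
      qed
    next
      case F2: False
      show ?thesis using ns_le[OF ip1(1) T1] sp_ge[of p2 i2] F2 ip2 ip1(3) by auto
    qed
  next
    case F1: False
    show ?thesis
    proof (cases "p2 < ?h")
      case T2: True
      show ?thesis using ns_le[OF ip2(1) T2] sp_ge[of p1 i1] F1 ip1 ip2(3) by auto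
    next
      case F2: False
      define k1 where "k1 = i1 * (i1 - 1) div 2 + (p1 - ?h)"
      define k2 where "k2 = i2 * (i2 - 1) div 2 + (p2 - ?h)"
      have L1: "?L j1 = ?s + ?w * real k1" using level_sp[of r n p1 i1] F1 ip1 unfolding k1_def by simp
      have L2: "?L j2 = ?s + ?w * real k2" using level_sp[of r n p2 i2] F2 ip2 unfolding k2_def by simp
      have "(i1, p1 - ?h) \<noteq> (i2, p2 - ?h)" using Suc.prems(3) ip1 ip2 F1 F2 by auto
      then have "k1 \<noteq> k2" unfolding k1_def k2_def
        using tri_disj[of "p1 - ?h" i1 "p2 - ?h" i2] ip1 ip2 F1 F2 by linarith
      show ?thesis
      proof (cases "k1 < k2")
        case True
        then have "real k1 + 1 \<le> real k2" by linarith
        then have "?w * (real k1 + 1) \<le> ?w * real k2" using wpos by (intro mult_left_mono) auto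
        then show ?thesis using L1 L2 by (simp add: algebra_simps)
      next
        case False
        then have "real k2 + 1 \<le> real k1" using \<open>k1 \<noteq> k2\<close> by linarith
        then have "?w * (real k2 + 1) \<le> ?w * real k1" using wpos by (intro mult_left_mono) auto
        then show ?thesis using L1 L2 by (simp add: algebra_simps)
      qed
    qed
  qed
qed

lemma level_unique:
  "in_stair_level r n j1 x \<Longrightarrow> in_stair_level r n j2 x \<Longrightarrow> j1 = j2"
  using disj[of j1 n j2] unfolding in_stair_level_def by force

lemma lift1:
  assumes "in_stair_level r n j x"
  shows "\<exists>i. i < r (Suc n) \<and> in_stair_level r (Suc n) (block_start r n i + j) x"
proof -
  let ?w = "stair_width r (Suc n)" and ?R = "r (Suc n)" and ?l = "stair_level r n j"
  have wpos: "?w > 0" using w_pos[OF sc] by simp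
  have jh: "j < stair_height r n" and x1: "?l \<le> x" and x2: "x < ?l + stair_width r n"
    using assms unfolding in_stair_level_def by auto
  define y where "y = (x - ?l) / ?w"
  have y0: "0 \<le> y" unfolding y_def using x1 wpos by simp
  have yR: "y < real ?R" unfolding y_def using x2 wpos w_Suc[OF sc, of n] by (simp add: divide_less_eq)
  define i where "i = nat \<lfloor>y\<rfloor>"
  have i1: "real i \<le> y" "y < real i + 1" unfolding i_def using y0 by linarith+
  have iR: "i < ?R" using i1 yR by linarith
  have "real i * ?w \<le> x - ?l" using i1(1) wpos unfolding y_def by (simp add: le_divide_eq)
  moreover have "x - ?l < (real i + 1) * ?w" using i1(2) wpos unfolding y_def by (simp add: divide_less_eq)
  moreover have "block_start r n i + j < stair_height r (Suc n)"
    using bs_mono[of "Suc i" "?R" r n] bs_Suc[of r n i] iR jh h_Suc_bs[of r n] by linarith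
  ultimately show ?thesis using level_ns[OF jh, of i] iR
    unfolding in_stair_level_def by (intro exI[of _ i]) (auto simp: algebra_simps)
qed

lemma lift1_top:
  assumes "in_stair_level r n j x" "Suc j < stair_height r n"
  shows "\<exists>j'. in_stair_level r (Suc n) j' x \<and> Suc j' < stair_height r (Suc n) \<and>
     stair_level r (Suc n) (Suc j') - stair_level r (Suc n) j' = stair_level r n (Suc j) - stair_level r n j"
proof -
  obtain i where i: "i < r (Suc n)" "in_stair_level r (Suc n) (block_start r n i + j) x"
    using lift1[OF assms(1)] by blast
  have "block_start r n i + Suc j < stair_height r (Suc n)"
    using bs_mono[of "Suc i" "r (Suc n)" r n] bs_Suc[of r n i] i(1) assms(2) h_Suc_bs[of r n] by linarith
  moreover have "stair_level r (Suc n) (block_start r n i + Suc j) = stair_level r n (Suc j) + real i * stair_width r (Suc n)"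
    using level_ns[OF assms(2)] by simp
  moreover have "stair_level r (Suc n) (block_start r n i + j) = stair_level r n j + real i * stair_width r (Suc n)"
    using level_ns[of j r n i] assms(2) by simp
  ultimately show ?thesis using i(2) by (intro exI[of _ "block_start r n i + j"]) simp
qed

lemma liftm:
  assumes "in_stair_level r n j x" "Suc j < stair_height r n" "n \<le> m"
  shows "\<exists>j'. in_stair_level r m j' x \<and> Suc j' < stair_height r m \<and>
     stair_level r m (Suc j') - stair_level r m j' = stair_level r n (Suc j) - stair_level r n j"
  using assms(3)
proof (induction m rule: dec_induct)
  case base then show ?case using assms by blast
next
  case (step m)
  then obtain j' where j': "in_stair_level r m j' x" "Suc j' < stair_height r m"
     "stair_level r m (Suc j') - stair_level r m j' = stair_level r n (Suc j) - stair_level r n j" by blast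
  show ?case using lift1_top[OF j'(1,2)] j'(3) by auto
qed

lemma T_eq:
  assumes "in_stair_level r n j x" "Suc j < stair_height r n"
  shows "staircase_T r x = x - stair_level r n j + stair_level r n (Suc j)"
proof -
  let ?P = "\<lambda>(n, j). Suc j < stair_height r n \<and> in_stair_level r n j x"
  have ex: "\<exists>n j. Suc j < stair_height r n \<and> in_stair_level r n j x" using assms by blast
  obtain n' j' where nj: "(SOME z. ?P z) = (n', j')" by (cases "SOME z. ?P z") auto
  have "?P (SOME z. ?P z)" by (rule someI[of ?P "(n, j)"]) (use assms in auto)
  then have P': "Suc j' < stair_height r n'" "in_stair_level r n' j' x" using nj by auto
  have T: "staircase_T r x = x - stair_level r n' j' + stair_level r n' (Suc j')"
    unfolding staircase_T_def using ex nj by simp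
  define m where "m = max n n'"
  obtain j1 where j1: "in_stair_level r m j1 x"
     "stair_level r m (Suc j1) - stair_level r m j1 = stair_level r n (Suc j) - stair_level r n j"
    using liftm[OF assms, of m] unfolding m_def by auto
  obtain j2 where j2: "in_stair_level r m j2 x"
     "stair_level r m (Suc j2) - stair_level r m j2 = stair_level r n' (Suc j') - stair_level r n' j'"
    using liftm[OF P'(2,1), of m] unfolding m_def by auto
  have "j1 = j2" using level_unique[OF j1(1) j2(1)] .
  then show ?thesis using T j1(2) j2(2) by simp
qed

lemma level0: "stair_level r n 0 = 0"
proof (induction n)
  case (Suc n)
  have "stair_level r (Suc n) (block_start r n 0 + 0) = stair_level r n 0 + real 0 * stair_width r (Suc n)"
    using level_ns[of 0 r n 0] h_pos[OF sc, of n] by simp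
  then show ?case using Suc by (simp add: block_start_def)
qed simp

lemma T_pow_base:
  assumes "0 \<le> x" "x < stair_width r N" "k < stair_height r N"
  shows "(staircase_T r ^^ k) x = x + stair_level r N k"
  using assms(3)
proof (induction k)
  case 0 then show ?case using level0 by simp
next
  case (Suc k)
  then have IH: "(staircase_T r ^^ k) x = x + stair_level r N k" by simp
  have "in_stair_level r N k (x + stair_level r N k)"
    unfolding in_stair_level_def using Suc.prems assms by simp
  then have "staircase_T r (x + stair_level r N k) = x + stair_level r N (Suc k)"
    using T_eq Suc.prems by simp
  then show ?case using IH by simp
qed

end

context
  fixes T :: "real \<Rightarrow> real" and f :: "real \<Rightarrow> real" and c :: real
  assumes fc: "\<And>x. f x \<ge> c" and cpos: "c > 0"
begin

lemma bsum_Suc: "birkhoff_sum T f (Suc n) x = birkhoff_sum T f n x + f ((T ^^ n) x)"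
  unfolding birkhoff_sum_def by simp

lemma bsum_add: "birkhoff_sum T f (k + m) x = birkhoff_sum T f k x + birkhoff_sum T f m ((T ^^ k) x)"
proof (induction m)
  case 0 then show ?case by (simp add: birkhoff_sum_def)
next
  case (Suc m)
  have "(T ^^ (k + m)) x = (T ^^ m) ((T ^^ k) x)" by (metis add.commute comp_apply funpow_add)
  then show ?case using Suc by (simp add: bsum_Suc)
qed

lemma bsum_mono: "k \<le> m \<Longrightarrow> birkhoff_sum T f k x \<le> birkhoff_sum T f m x"
proof (induction m rule: dec_induct)
  case (step m) then show ?case using fc[of "(T ^^ m) x"] cpos by (simp add: bsum_Suc)
qed simp

lemma bsum_ge: "birkhoff_sum T f m x \<ge> real m * c"
proof (induction m)
  case (Suc m) then show ?case using fc[of "(T ^^ m) x"] by (simp add: bsum_Suc algebra_simps)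
qed (simp add: birkhoff_sum_def)

lemma bsum_ex: "\<exists>n. u < birkhoff_sum T f (Suc n) x"
proof -
  obtain n :: nat where "u / c < real n" using reals_Archimedean2 by blast
  then have "u < real n * c" using cpos by (simp add: divide_less_eq)
  also have "\<dots> \<le> birkhoff_sum T f (Suc n) x"
    using bsum_ge[of "Suc n" x] cpos by (simp add: algebra_simps)
  finally show ?thesis by blast
qed

lemma flow_shift: "susp_flow T f t (x, y) = susp_flow T f 0 (x, y + t)"
  unfolding susp_flow_def by (simp add: Let_def)

lemma cocycle:
  assumes "v \<ge> 0"
  shows "susp_flow T f 0 ((T ^^ k) x, v) = susp_flow T f 0 (x, v + birkhoff_sum T f k x)"
proof -
  define m where "m = (LEAST m. v < birkhoff_sum T f (Suc m) ((T ^^ k) x))"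
  have m1: "v < birkhoff_sum T f (Suc m) ((T ^^ k) x)"
    unfolding m_def using bsum_ex by (rule LeastI_ex)
  have "(LEAST n. v + birkhoff_sum T f k x < birkhoff_sum T f (Suc n) x) = k + m"
  proof (rule Least_equality)
    show "v + birkhoff_sum T f k x < birkhoff_sum T f (Suc (k + m)) x"
      using m1 bsum_add[of k "Suc m" x] by simp
  next
    fix n assume n: "v + birkhoff_sum T f k x < birkhoff_sum T f (Suc n) x"
    show "k + m \<le> n"
    proof (cases "k \<le> n")
      case True
      then obtain m' where m': "n = k + m'" using le_Suc_ex by blast
      then have "v < birkhoff_sum T f (Suc m') ((T ^^ k) x)" using n bsum_add[of k "Suc m'" x] by simp
      then have "m \<le> m'" unfolding m_def by (rule Least_le)
      then show ?thesis using m' by simp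
    next
      case False
      then have "birkhoff_sum T f (Suc n) x \<le> birkhoff_sum T f k x" by (intro bsum_mono) simp
      then show ?thesis using n assms by simp
    qed
  qed
  moreover have e: "(T^^(k+m)) x = (T^^m) ((T^^k) x)" by (metis add.commute comp_apply funpow_add)
  ultimately show ?thesis unfolding susp_flow_def
    using bsum_add[of k m x] by (simp add: Let_def m_def[symmetric])
qed

lemma flow_comp:
  assumes s0: "s \<ge> 0"
  shows "susp_flow T f (s + t) z = susp_flow T f s (susp_flow T f t z)"
proof -
  obtain x y where z: "z = (x, y)" by (cases z)
  define n where "n = (LEAST n. y + t < birkhoff_sum T f (Suc n) x)"
  have ft: "susp_flow T f t z = ((T ^^ n) x, y + t - birkhoff_sum T f n x)"
    unfolding susp_flow_def z n_def by (simp add: Let_def)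
  show ?thesis
  proof (cases n)
    case 0
    have "susp_flow T f s (susp_flow T f t z) = susp_flow T f 0 (x, y + t + s)"
      unfolding ft using 0 flow_shift by (simp add: birkhoff_sum_def)
    also have "\<dots> = susp_flow T f (s + t) z" unfolding z flow_shift[of "s+t"] by (simp add: algebra_simps)
    finally show ?thesis by simp
  next
    case (Suc n0)
    have "\<not> y + t < birkhoff_sum T f (Suc n0) x"
      using not_less_Least[of n0 "\<lambda>n. y + t < birkhoff_sum T f (Suc n) x"] Suc unfolding n_def by simp
    then have v0: "y + t - birkhoff_sum T f n x \<ge> 0" using Suc by simp
    have "susp_flow T f s (susp_flow T f t z) = susp_flow T f 0 ((T ^^ n) x, y + t - birkhoff_sum T f n x + s)"
      unfolding ft by (rule flow_shift)
    also have "\<dots> = susp_flow T f 0 (x, y + t + s)"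
      using cocycle[of "y + t - birkhoff_sum T f n x + s" n x] v0 s0 by (simp add: algebra_simps)
    also have "\<dots> = susp_flow T f (s + t) z" unfolding z flow_shift[of "s+t"] by (simp add: algebra_simps)
    finally show ?thesis by simp
  qed
qed

lemma flow_zero_id: "0 \<le> y \<Longrightarrow> y < f x \<Longrightarrow> susp_flow T f 0 (x, y) = (x, y)"
proof -
  assume a: "0 \<le> y" "y < f x"
  have "(LEAST n. y + 0 < birkhoff_sum T f (Suc n) x) = 0"
    using a by (intro Least_equality) (auto simp: birkhoff_sum_def)
  then show ?thesis unfolding susp_flow_def by (simp add: birkhoff_sum_def Let_def)
qed

end

context
  fixes r :: "nat \<Rightarrow> nat"
  assumes sc: "staircase_seq r"
begin

definition "term_r n = real (r (Suc n) * (r (Suc n) - 1) div 2) / real (cut_prod r (Suc n))"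

lemma s_formula: "stair_spacer_start r (Suc N) = stair_a r * (1 + (\<Sum>n<N. term_r n))"
proof (induction N)
  case 0 then show ?case using s_1[OF sc] by simp
next
  case (Suc N)
  have "stair_width r (Suc N) * real (r (Suc N) * (r (Suc N) - 1) div 2) = stair_a r * term_r N"
    unfolding stair_width_def term_r_def by simp
  then show ?case using Suc s_Suc[OF sc, of N] by (simp add: algebra_simps)
qed

lemma summ_term: "summable term_r"
  using summ[OF sc] unfolding term_r_def[abs_def] .

lemma a_eq: "stair_a r * (1 + suminf term_r) = 1"
proof -
  have "suminf term_r = stair_spacer_sum r" unfolding stair_spacer_sum_def term_r_def[abs_def] ..
  then show ?thesis unfolding stair_a_def using spacer_sum_nonneg[OF sc] by simp
qed

lemma s_le1: "stair_spacer_start r (Suc N) \<le> 1"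
proof -
  have "(\<Sum>n<N. term_r n) \<le> suminf term_r"
    using summ_term by (rule sum_le_suminf) (auto simp: term_r_def)
  then have "stair_a r * (1 + (\<Sum>n<N. term_r n)) \<le> stair_a r * (1 + suminf term_r)"
    using a_pos[OF sc] by (intro mult_left_mono) auto
  then show ?thesis using s_formula a_eq by simp
qed

lemma s_lim: "(\<lambda>N. stair_spacer_start r (Suc N)) \<longlonglongrightarrow> 1"
proof -
  have "(\<lambda>N. \<Sum>n<N. term_r n) \<longlonglongrightarrow> suminf term_r"
    using summ_term by (rule summable_LIMSEQ)
  then have "(\<lambda>N. stair_a r * (1 + (\<Sum>n<N. term_r n))) \<longlonglongrightarrow> stair_a r * (1 + suminf term_r)"
    by (intro tendsto_intros)
  then show ?thesis using s_formula a_eq by simp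
qed

lemma hw: "real (stair_height r N) * stair_width r N = stair_spacer_start r (Suc N)"
proof (induction N)
  case 0 then show ?case using s_1[OF sc] by (simp add: stair_width_def cut_prod_def)
next
  case (Suc N)
  let ?R = "r (Suc N)" and ?w = "stair_width r (Suc N)"
  have "real (stair_height r (Suc N)) = real ?R * real (stair_height r N) + real (?R * (?R - 1) div 2)"
    by simp
  then have "real (stair_height r (Suc N)) * ?w = real (stair_height r N) * (real ?R * ?w) + ?w * real (?R * (?R - 1) div 2)"
    by (simp add: algebra_simps)
  also have "\<dots> = stair_spacer_start r (Suc (Suc N))"
    using Suc w_Suc[OF sc, of N] s_Suc[OF sc, of N] by simp
  finally show ?case .
qed

end

context
  fixes r :: "nat \<Rightarrow> nat" and p q :: real
  assumes sc: "staircase_seq r" and qpos: "q > 0" and pq: "p > q"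
begin

abbreviation "ff \<equiv> two_wise_roof r p q"
abbreviation "TT \<equiv> staircase_T r"
abbreviation "sig k \<equiv> birkhoff_sum TT ff k 0"

lemma f_ge: "ff x \<ge> q" unfolding two_wise_roof_def using pq by simp

lemma f_le: "ff x \<le> p" unfolding two_wise_roof_def using pq by simp

lemma f_level: "in_stair_level r N k x \<Longrightarrow> ff x = ff (stair_level r N k)"
  using inv[OF sc, of k N] unfolding in_stair_level_def two_wise_roof_def
  by (auto split: if_splits)

lemma bsum_base:
  assumes "0 \<le> x" "x < stair_width r N" "k \<le> stair_height r N"
  shows "birkhoff_sum TT ff k x = sig k"
  using assms(3)
proof (induction k)
  case 0 then show ?case by (simp add: birkhoff_sum_def)
next
  case (Suc k)
  have w0: "0 < stair_width r N" using w_pos[OF sc] by simp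
  have k: "k < stair_height r N" using Suc.prems by simp
  have lev: "in_stair_level r N k (x + stair_level r N k)"
    unfolding in_stair_level_def using assms k by simp
  have lev0: "in_stair_level r N k (0 + stair_level r N k)"
    unfolding in_stair_level_def using w0 k by simp
  have "ff ((TT ^^ k) x) = ff (stair_level r N k)"
    unfolding T_pow_base[OF sc assms(1,2) k] by (rule f_level[OF lev])
  moreover have "ff ((TT ^^ k) 0) = ff (stair_level r N k)"
    unfolding T_pow_base[OF sc order.refl w0 k] by (rule f_level[OF lev0])
  ultimately show ?case using Suc by (simp add: birkhoff_sum_def)
qed

lemma sig_Suc: "sig (Suc k) = sig k + ff ((TT ^^ k) 0)" by (simp add: birkhoff_sum_def)

lemma sig_mono: "k \<le> m \<Longrightarrow> sig k \<le> sig m"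
  using bsum_mono[where T=TT and f=ff and c=q, OF f_ge qpos] by blast

lemma sig0: "sig 0 = 0" by (simp add: birkhoff_sum_def)

lemma sig_ge: "sig k \<ge> real k * q"
  using bsum_ge[where T=TT and f=ff and c=q, OF f_ge qpos] by blast

lemma sig_level: "k < stair_height r N \<Longrightarrow> sig (Suc k) - sig k = ff (stair_level r N k)"
  using T_pow_base[OF sc, of 0 N k] w_pos[OF sc, of N] by (simp add: sig_Suc)

lemma psi_piece:
  assumes "0 \<le> x" "x < stair_width r N" "k < stair_height r N" "sig k \<le> u" "u < sig (Suc k)"
  shows "susp_flow TT ff 0 (x, u) = (x + stair_level r N k, u - sig k)"
proof -
  have "(LEAST n. u + 0 < birkhoff_sum TT ff (Suc n) x) = k"
  proof (rule Least_equality)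
    show "u + 0 < birkhoff_sum TT ff (Suc k) x" using bsum_base[OF assms(1,2), of "Suc k"] assms by simp
  next
    fix n assume n: "u + 0 < birkhoff_sum TT ff (Suc n) x"
    show "k \<le> n"
    proof (rule ccontr)
      assume "\<not> k \<le> n"
      then have "Suc n \<le> k" by simp
      then have "birkhoff_sum TT ff (Suc n) x \<le> birkhoff_sum TT ff k x"
        using bsum_mono[where T=TT and f=ff and c=q, OF f_ge qpos] by blast
      then show False using n bsum_base[OF assms(1,2), of k] assms by simp
    qed
  qed
  then show ?thesis unfolding susp_flow_def
    using T_pow_base[OF sc assms(1,2,3)] bsum_base[OF assms(1,2), of k] assms(3) by (simp add: Let_def)
qed

lemma find_piece:
  assumes "0 \<le> u" "u < sig (stair_height r N)"
  shows "\<exists>k < stair_height r N. sig k \<le> u \<and> u < sig (Suc k)"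
proof -
  let ?H = "stair_height r N"
  have H: "?H \<ge> 1" using h_pos[OF sc] by simp
  have ex: "u < sig (Suc (?H - 1))" using assms H by simp
  define k where "k = (LEAST k. u < sig (Suc k))"
  have k1: "u < sig (Suc k)" unfolding k_def by (rule LeastI[of "\<lambda>k. u < sig (Suc k)", OF ex])
  have k2: "k \<le> ?H - 1" unfolding k_def by (rule Least_le[of "\<lambda>k. u < sig (Suc k)", OF ex])
  have k3: "sig k \<le> u"
  proof (cases k)
    case 0 then show ?thesis using assms sig0 by simp
  next
    case (Suc k0)
    then show ?thesis using not_less_Least[of k0 "\<lambda>k. u < sig (Suc k)"] unfolding k_def by simp
  qed
  show ?thesis using k1 k2 k3 H by (intro exI[of _ k]) auto
qed

lemma psi_in:
  assumes "0 \<le> x" "x < stair_width r N" "0 \<le> u" "u < sig (stair_height r N)"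
  shows "\<exists>k < stair_height r N. susp_flow TT ff 0 (x, u) = (x + stair_level r N k, u - sig k) \<and>
     in_stair_level r N k (x + stair_level r N k) \<and> sig k \<le> u \<and> u < sig (Suc k) \<and>
     susp_flow TT ff 0 (x, u) \<in> susp_space ff"
proof -
  obtain k where k: "k < stair_height r N" "sig k \<le> u" "u < sig (Suc k)"
    using find_piece[OF assms(3,4)] by blast
  have lev: "in_stair_level r N k (x + stair_level r N k)"
    unfolding in_stair_level_def using k assms by simp
  have i: "0 \<le> stair_level r N k" "stair_level r N k + stair_width r N \<le> stair_spacer_start r (Suc N)"
    using inv[OF sc k(1)] by auto
  have "ff (x + stair_level r N k) = ff (stair_level r N k)" using f_level[OF lev] .
  also have "\<dots> = sig (Suc k) - sig k" using sig_level[OF k(1)] by simp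
  finally have fx: "ff (x + stair_level r N k) = sig (Suc k) - sig k" .
  have "x + stair_level r N k < 1" using i assms s_le1[OF sc, of N] by linarith
  then have mem: "(x + stair_level r N k, u - sig k) \<in> susp_space ff"
    unfolding susp_space_def using i assms k fx by simp
  have e: "susp_flow TT ff 0 (x, u) = (x + stair_level r N k, u - sig k)"
    using psi_piece[OF assms(1,2) k] .
  show ?thesis
    apply (rule exI[of _ k])
    using k lev mem e by simp
qed

lemma psi_inj:
  assumes "0 \<le> x1" "x1 < stair_width r N" "0 \<le> u1" "u1 < sig (stair_height r N)"
    "0 \<le> x2" "x2 < stair_width r N" "0 \<le> u2" "u2 < sig (stair_height r N)"
    "susp_flow TT ff 0 (x1, u1) = susp_flow TT ff 0 (x2, u2)"
  shows "x1 = x2 \<and> u1 = u2"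
proof -
  obtain k1 where k1: "k1 < stair_height r N" "susp_flow TT ff 0 (x1, u1) = (x1 + stair_level r N k1, u1 - sig k1)"
     "in_stair_level r N k1 (x1 + stair_level r N k1)"
    using psi_in[OF assms(1-4)] by blast
  obtain k2 where k2: "k2 < stair_height r N" "susp_flow TT ff 0 (x2, u2) = (x2 + stair_level r N k2, u2 - sig k2)"
     "in_stair_level r N k2 (x2 + stair_level r N k2)"
    using psi_in[OF assms(5-8)] by blast
  have e: "x1 + stair_level r N k1 = x2 + stair_level r N k2" "u1 - sig k1 = u2 - sig k2"
    using k1(2) k2(2) assms(9) by auto
  have "k1 = k2" using level_unique[OF sc k1(3)] k2(3) e(1) by simp
  then show ?thesis using e by simp
qed

lemma psi_cover:
  assumes "(x', y') \<in> susp_space ff" "in_stair_level r N k x'"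
  shows "\<exists>x u. 0 \<le> x \<and> x < stair_width r N \<and> 0 \<le> u \<and> u < sig (stair_height r N) \<and>
     susp_flow TT ff 0 (x, u) = (x', y')"
proof -
  have k: "k < stair_height r N" using assms(2) unfolding in_stair_level_def by simp
  define x where "x = x' - stair_level r N k"
  define u where "u = sig k + y'"
  have x: "0 \<le> x" "x < stair_width r N" using assms(2) unfolding x_def in_stair_level_def by auto
  have y: "0 \<le> y'" "y' < ff x'" using assms(1) unfolding susp_space_def by auto
  have "ff x' = sig (Suc k) - sig k" using f_level[OF assms(2)] sig_level[OF k] by simp
  then have u: "sig k \<le> u" "u < sig (Suc k)" using y unfolding u_def by auto
  have "sig (Suc k) \<le> sig (stair_height r N)" using k by (intro sig_mono) simp
  moreover have "0 \<le> sig k" using sig_ge[of k] qpos by (meson mult_nonneg_nonneg of_nat_0_le_iff order_trans less_imp_le)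
  ultimately have "0 \<le> u" "u < sig (stair_height r N)" using u by auto
  moreover have "susp_flow TT ff 0 (x, u) = (x', y')"
    using psi_piece[OF x k u] unfolding x_def u_def by simp
  ultimately show ?thesis using x by blast
qed

end

context
  fixes r :: "nat \<Rightarrow> nat" and p q :: real
  assumes sc: "staircase_seq r" and qpos: "q > 0" and pq: "p > q"
begin

definition "TN N x = x + (\<Sum>j<stair_height r N - 1.
   indicator {stair_level r N j ..< stair_level r N j + stair_width r N} x *
     (stair_level r N (Suc j) - stair_level r N j))"

lemma TN_meas: "TN N \<in> borel_measurable borel"
  unfolding TN_def[abs_def] by measurable

lemma TN_lim: "(\<lambda>N. TN N x) \<longlonglongrightarrow> staircase_T r x"
proof (cases "\<exists>n j. Suc j < stair_height r n \<and> in_stair_level r n j x")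
  case True
  then obtain n j where nj: "Suc j < stair_height r n" "in_stair_level r n j x" by blast
  have "eventually (\<lambda>N. TN N x = staircase_T r x) sequentially"
    unfolding eventually_sequentially
  proof (intro exI allI impI)
    fix N assume "n \<le> N"
    then obtain j' where j': "in_stair_level r N j' x" "Suc j' < stair_height r N"
      "stair_level r N (Suc j') - stair_level r N j' = stair_level r n (Suc j) - stair_level r n j"
      using liftm[OF sc nj(2,1)] by blast
    have ind: "indicator {stair_level r N i ..< stair_level r N i + stair_width r N} x = (if i = j' then 1 else (0::real))"
      if "i < stair_height r N - 1" for i
    proof -
      have "x \<in> {stair_level r N i ..< stair_level r N i + stair_width r N} \<longleftrightarrow> i = j'"
        using level_unique[OF sc _ j'(1), of i] j'(1) that unfolding in_stair_level_def by auto
      then show ?thesis by (simp add: indicator_def)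
    qed
    have "TN N x = x + (\<Sum>i<stair_height r N - 1. (if i = j' then
        (stair_level r N (Suc i) - stair_level r N i) else 0))"
      unfolding TN_def using ind by (intro arg_cong2[where f="(+)"] sum.cong) auto
    also have "\<dots> = x + (stair_level r N (Suc j') - stair_level r N j')"
      using j'(2) by (auto simp: sum.delta)
    also have "\<dots> = staircase_T r x"
      using T_eq[OF sc j'(1,2)] by simp
    finally show "TN N x = staircase_T r x" .
  qed
  then show ?thesis by (rule tendsto_eventually)
next
  case False
  have "TN N x = x" for N
  proof -
    have "indicator {stair_level r N i ..< stair_level r N i + stair_width r N} x = (0::real)"
      if "i < stair_height r N - 1" for i
      using False that unfolding in_stair_level_def by (auto simp: indicator_def)
    then show ?thesis unfolding TN_def by simp
  qed
  moreover have "staircase_T r x = x" unfolding staircase_T_def using False by auto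
  ultimately show ?thesis by simp
qed

lemma T_meas: "staircase_T r \<in> borel_measurable borel"
  by (rule borel_measurable_LIMSEQ_real[OF TN_lim TN_meas])

lemma Tpow_meas: "(staircase_T r ^^ k) \<in> borel_measurable borel"
proof (induction k)
  case (Suc k)
  show ?case unfolding funpow_Suc_right by (rule measurable_comp[OF T_meas Suc.IH])
qed simp

lemma f_meas: "two_wise_roof r p q \<in> borel_measurable borel"
  unfolding two_wise_roof_def[abs_def] by measurable

lemma bsum_meas: "birkhoff_sum (staircase_T r) (two_wise_roof r p q) k \<in> borel_measurable borel"
proof -
  have "(\<lambda>x. two_wise_roof r p q ((staircase_T r ^^ i) x)) \<in> borel_measurable borel" for i
    using Tpow_meas f_meas by (rule measurable_compose)
  then show ?thesis unfolding birkhoff_sum_def[abs_def] by (intro borel_measurable_sum) auto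
qed

lemma fst_meas: "fst \<in> borel_measurable (borel :: (real \<times> real) measure)"
  by (intro borel_measurable_continuous_onI continuous_intros)

lemma snd_meas: "snd \<in> borel_measurable (borel :: (real \<times> real) measure)"
  by (intro borel_measurable_continuous_onI continuous_intros)

lemma flow_meas: "susp_flow (staircase_T r) (two_wise_roof r p q) t \<in> borel_measurable borel"
proof -
  let ?S = "birkhoff_sum (staircase_T r) (two_wise_roof r p q)"
  have g: "(\<lambda>z::real\<times>real. LEAST n. snd z + t < ?S (Suc n) (fst z)) \<in> borel \<rightarrow>\<^sub>M count_space UNIV"
  proof (rule measurable_Least)
    fix n
    have [measurable]: "(\<lambda>z::real\<times>real. ?S (Suc n) (fst z)) \<in> borel_measurable borel"
      using fst_meas bsum_meas by (rule measurable_compose)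
    have [measurable]: "snd \<in> borel_measurable (borel :: (real \<times> real) measure)" by (rule snd_meas)
    show "Measurable.pred borel (\<lambda>z::real\<times>real. snd z + t < ?S (Suc n) (fst z))" by measurable
  qed
  have F: "(\<lambda>z::real\<times>real. ((staircase_T r ^^ n) (fst z), snd z + t - ?S n (fst z))) \<in> borel_measurable borel" for n
  proof -
    have "(\<lambda>z::real\<times>real. (staircase_T r ^^ n) (fst z)) \<in> borel_measurable borel"
      using fst_meas Tpow_meas by (rule measurable_compose)
    moreover have "(\<lambda>z::real\<times>real. ?S n (fst z)) \<in> borel_measurable borel"
      using fst_meas bsum_meas by (rule measurable_compose)
    moreover note snd_meas
    ultimately show ?thesis by (intro borel_measurable_Pair borel_measurable_diff borel_measurable_add) auto
  qed
  have "(\<lambda>z. (\<lambda>n z. ((staircase_T r ^^ n) (fst z), snd z + t - ?S n (fst z)))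
       (LEAST n. snd z + t < ?S (Suc n) (fst z)) z) \<in> borel_measurable borel"
    by (rule measurable_compose_countable[OF F g])
  moreover have "susp_flow (staircase_T r) (two_wise_roof r p q) t = (\<lambda>z. (\<lambda>n z. ((staircase_T r ^^ n) (fst z), snd z + t - ?S n (fst z)))
       (LEAST n. snd z + t < ?S (Suc n) (fst z)) z)"
    unfolding susp_flow_def[abs_def] by (simp add: Let_def)
  ultimately show ?thesis by simp
qed

end

lemma rect_borel: "(A :: real set) \<in> sets borel \<Longrightarrow> (B :: real set) \<in> sets borel \<Longrightarrow> A \<times> B \<in> sets (borel :: (real \<times> real) measure)"
proof -
  assume "A \<in> sets borel" "B \<in> sets borel"
  then have "A \<times> B \<in> sets (borel \<Otimes>\<^sub>M borel)" by (rule pair_measureI)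
  moreover have "(borel \<Otimes>\<^sub>M borel) = (borel :: (real \<times> real) measure)" by (rule borel_prod)
  ultimately show ?thesis by metis
qed

lemma measure_rect: "(A :: real set) \<in> sets borel \<Longrightarrow> (B :: real set) \<in> sets borel \<Longrightarrow>
   emeasure lborel (A \<times> B) = emeasure lborel A * emeasure lborel B"
proof -
  assume "A \<in> sets borel" "B \<in> sets borel"
  then have "emeasure (lborel \<Otimes>\<^sub>M lborel) (A \<times> B) = emeasure lborel A * emeasure lborel B"
    by (intro lborel.emeasure_pair_measure_Times) auto
  then show ?thesis by (simp add: lborel_prod)
qed

lemma measure_translate:
  fixes c :: "real \<times> real"
  assumes "A \<in> sets borel"
  shows "emeasure lborel ((+) c -` A) = emeasure lborel A"
proof -
  have "emeasure (distr lborel borel ((+) c)) A = emeasure lborel ((+) c -` A \<inter> space lborel)"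
    using assms by (intro emeasure_distr) auto
  then show ?thesis by (simp add: lborel_distr_plus)
qed

lemma bounded_fin: "bounded (A :: (real \<times> real) set) \<Longrightarrow> emeasure lborel A \<noteq> \<infinity>"
  using emeasure_bounded_finite by (metis less_irrefl)

context
  fixes r :: "nat \<Rightarrow> nat" and p q :: real
  assumes sc: "staircase_seq r" and qpos: "q > 0" and pq: "p > q"
begin

abbreviation "FF \<equiv> two_wise_roof r p q"
abbreviation "TR \<equiv> staircase_T r"
abbreviation "Ps \<equiv> susp_flow TR FF 0"
abbreviation "sg k \<equiv> birkhoff_sum TR FF k 0"

definition "QQ N (\<alpha>::real) \<beta> = {0..<stair_width r N} \<times> {\<alpha>..<\<beta>}"
definition "DD N \<alpha> \<beta> k = {0..<stair_width r N} \<times> ({\<alpha>..<\<beta>} \<inter> {sg k..<sg (Suc k)})"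
definition "dd N k = (stair_level r N k, - sg k)"

lemma sg_le: "k1 < k2 \<Longrightarrow> sg (Suc k1) \<le> sg k2"
  using sig_mono[OF sc qpos pq, of "Suc k1" k2] by simp

lemma sg_nonneg: "0 \<le> sg k"
  using sig_mono[OF sc qpos pq, of 0 k] sig0[OF sc qpos pq] by simp

lemma D_cover:
  assumes "0 \<le> \<alpha>" "\<beta> \<le> sg (stair_height r N)"
  shows "QQ N \<alpha> \<beta> = (\<Union>k<stair_height r N. DD N \<alpha> \<beta> k)"
proof
  show "QQ N \<alpha> \<beta> \<subseteq> (\<Union>k<stair_height r N. DD N \<alpha> \<beta> k)"
  proof
    fix z assume z: "z \<in> QQ N \<alpha> \<beta>"
    then have u: "0 \<le> snd z" "snd z < sg (stair_height r N)" using assms unfolding QQ_def by auto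
    obtain k where "k < stair_height r N" "sg k \<le> snd z" "snd z < sg (Suc k)"
      using find_piece[OF sc qpos pq u] by blast
    then show "z \<in> (\<Union>k<stair_height r N. DD N \<alpha> \<beta> k)" using z unfolding QQ_def DD_def by auto
  qed
qed (auto simp: QQ_def DD_def)

lemma psi_D:
  assumes "k < stair_height r N" "z \<in> DD N \<alpha> \<beta> k"
  shows "Ps z = z + dd N k"
proof -
  obtain x u where z: "z = (x, u)" by (cases z)
  have "0 \<le> x" "x < stair_width r N" "sg k \<le> u" "u < sg (Suc k)" using assms(2) unfolding z DD_def by auto
  then show ?thesis using psi_piece[OF sc qpos pq _ _ assms(1)] unfolding z dd_def by simp
qed

lemma D_disj: "disjoint_family_on (DD N \<alpha> \<beta>) {..<stair_height r N}"
  unfolding disjoint_family_on_def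
proof (intro ballI impI)
  fix k1 k2 assume "k1 \<in> {..<stair_height r N}" "k2 \<in> {..<stair_height r N}" "k1 \<noteq> k2"
  then have "k1 < k2 \<or> k2 < k1" by auto
  then show "DD N \<alpha> \<beta> k1 \<inter> DD N \<alpha> \<beta> k2 = {}"
    using sg_le[of k1 k2] sg_le[of k2 k1] unfolding DD_def by auto
qed

lemma D_borel: "DD N \<alpha> \<beta> k \<in> sets borel"
  unfolding DD_def by (intro rect_borel) auto

lemma Q_borel: "QQ N \<alpha> \<beta> \<in> sets borel"
  unfolding QQ_def by (intro rect_borel) auto

lemma psiD_img:
  assumes "k < stair_height r N"
  shows "Ps ` DD N \<alpha> \<beta> k = (+) (- dd N k) -` DD N \<alpha> \<beta> k"
proof
  show "Ps ` DD N \<alpha> \<beta> k \<subseteq> (+) (- dd N k) -` DD N \<alpha> \<beta> k"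
    using psi_D[OF assms] by auto
next
  show "(+) (- dd N k) -` DD N \<alpha> \<beta> k \<subseteq> Ps ` DD N \<alpha> \<beta> k"
  proof
    fix y assume "y \<in> (+) (- dd N k) -` DD N \<alpha> \<beta> k"
    then have y: "- dd N k + y \<in> DD N \<alpha> \<beta> k" by simp
    then have "Ps (- dd N k + y) = y" using psi_D[OF assms y] by simp
    then show "y \<in> Ps ` DD N \<alpha> \<beta> k" using y by force
  qed
qed

lemma psiD_borel:
  assumes "k < stair_height r N"
  shows "Ps ` DD N \<alpha> \<beta> k \<in> sets borel"
proof -
  have m: "(+) (- dd N k) \<in> borel_measurable borel"
    by (intro borel_measurable_continuous_onI continuous_intros)
  have "(+) (- dd N k) -` DD N \<alpha> \<beta> k \<inter> space borel \<in> sets borel"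
    by (rule measurable_sets[OF m D_borel])
  then show ?thesis unfolding psiD_img[OF assms] by simp
qed

lemma psiD_level:
  assumes "k < stair_height r N" "y \<in> Ps ` DD N \<alpha> \<beta> k"
  shows "in_stair_level r N k (fst y)"
proof -
  obtain z where z: "z \<in> DD N \<alpha> \<beta> k" "y = Ps z" using assms(2) by blast
  then have "y = z + dd N k" using psi_D[OF assms(1)] by simp
  then show ?thesis using z(1) assms(1) unfolding DD_def dd_def in_stair_level_def by auto
qed

lemma psi_meas: "Ps \<in> borel_measurable borel"
  using flow_meas[OF sc qpos pq, of 0] .

lemma psiQ_borel:
  assumes "0 \<le> \<alpha>" "\<beta> \<le> sg (stair_height r N)"
  shows "Ps ` QQ N \<alpha> \<beta> \<in> sets borel"
proof -
  have "Ps ` QQ N \<alpha> \<beta> = (\<Union>k<stair_height r N. Ps ` DD N \<alpha> \<beta> k)"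
    unfolding D_cover[OF assms] by blast
  then show ?thesis using psiD_borel by auto
qed

lemma S_bounded: "bounded (susp_space FF)"
proof -
  have "susp_space FF \<subseteq> cbox (0, 0) (1, p)"
  proof
    fix z assume "z \<in> susp_space FF"
    then obtain a b where z: "z = (a, b)" "0 \<le> a" "a < 1" "0 \<le> b" "b < FF a"
      unfolding susp_space_def by auto
    moreover have "FF a \<le> p" using f_le[OF sc qpos pq] .
    ultimately show "z \<in> cbox (0, 0) (1, p)" unfolding cbox_Pair_eq by auto
  qed
  then show ?thesis by (rule bounded_subset[OF bounded_cbox])
qed

lemma Q_bounded: "bounded (QQ N \<alpha> \<beta>)"
proof -
  have "QQ N \<alpha> \<beta> \<subseteq> cbox (0, \<alpha>) (stair_width r N, \<beta>)"
    unfolding QQ_def cbox_Pair_eq by auto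
  then show ?thesis by (rule bounded_subset[OF bounded_cbox])
qed

lemma psiQ_measure:
  assumes "0 \<le> \<alpha>" "\<beta> \<le> sg (stair_height r N)" "E \<in> sets borel"
  shows "measure lborel (Ps -` E \<inter> QQ N \<alpha> \<beta>) = measure lborel (E \<inter> Ps ` QQ N \<alpha> \<beta>)"
proof -
  let ?H = "stair_height r N"
  have pre_k: "Ps -` E \<inter> DD N \<alpha> \<beta> k = (+) (dd N k) -` (E \<inter> Ps ` DD N \<alpha> \<beta> k)" if k: "k < ?H" for k
  proof -
    have iff: "z \<in> DD N \<alpha> \<beta> k \<longleftrightarrow> dd N k + z \<in> Ps ` DD N \<alpha> \<beta> k" for z
      unfolding psiD_img[OF k] by (simp add: add.assoc[symmetric])
    have c: "z + dd N k = dd N k + z" for z by (rule add.commute)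
    show ?thesis
    proof (intro set_eqI iffI)
      fix z assume "z \<in> Ps -` E \<inter> DD N \<alpha> \<beta> k"
      then show "z \<in> (+) (dd N k) -` (E \<inter> Ps ` DD N \<alpha> \<beta> k)"
        using psi_D[OF k, of z] iff[of z] c[of z] by simp
    next
      fix z assume "z \<in> (+) (dd N k) -` (E \<inter> Ps ` DD N \<alpha> \<beta> k)"
      then show "z \<in> Ps -` E \<inter> DD N \<alpha> \<beta> k"
        using psi_D[OF k, of z] iff[of z] c[of z] by simp
    qed
  qed
  have eq_k: "measure lborel (Ps -` E \<inter> DD N \<alpha> \<beta> k) = measure lborel (E \<inter> Ps ` DD N \<alpha> \<beta> k)"
    if k: "k < ?H" for k
    unfolding pre_k[OF k] measure_def
    using measure_translate[of "E \<inter> Ps ` DD N \<alpha> \<beta> k" "dd N k"] assms(3) psiD_borel[OF k] by simp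
  have L: "Ps -` E \<inter> QQ N \<alpha> \<beta> = (\<Union>k<?H. Ps -` E \<inter> DD N \<alpha> \<beta> k)"
    unfolding D_cover[OF assms(1,2)] by blast
  have R: "E \<inter> Ps ` QQ N \<alpha> \<beta> = (\<Union>k<?H. E \<inter> Ps ` DD N \<alpha> \<beta> k)"
    unfolding D_cover[OF assms(1,2)] by blast
  have preE: "Ps -` E \<in> sets borel"
    using measurable_sets[OF psi_meas assms(3)] by simp
  have "measure lborel (Ps -` E \<inter> QQ N \<alpha> \<beta>) = (\<Sum>k<?H. measure lborel (Ps -` E \<inter> DD N \<alpha> \<beta> k))"
    unfolding L
  proof (rule measure_finite_Union)
    show "(\<lambda>k. Ps -` E \<inter> DD N \<alpha> \<beta> k) ` {..<?H} \<subseteq> sets lborel"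
      using preE D_borel by auto
    show "disjoint_family_on (\<lambda>k. Ps -` E \<inter> DD N \<alpha> \<beta> k) {..<?H}"
      using D_disj unfolding disjoint_family_on_def by blast
    show "emeasure lborel (Ps -` E \<inter> DD N \<alpha> \<beta> k) \<noteq> \<infinity>" for k
    proof (rule bounded_fin)
      have "Ps -` E \<inter> DD N \<alpha> \<beta> k \<subseteq> QQ N \<alpha> \<beta>" unfolding DD_def QQ_def by auto
      then show "bounded (Ps -` E \<inter> DD N \<alpha> \<beta> k)" using Q_bounded bounded_subset by blast
    qed
  qed simp
  also have "\<dots> = (\<Sum>k<?H. measure lborel (E \<inter> Ps ` DD N \<alpha> \<beta> k))"
    using eq_k by (intro sum.cong) auto
  also have "\<dots> = measure lborel (E \<inter> Ps ` QQ N \<alpha> \<beta>)"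
    unfolding R
  proof (rule measure_finite_Union[symmetric])
    show "(\<lambda>k. E \<inter> Ps ` DD N \<alpha> \<beta> k) ` {..<?H} \<subseteq> sets lborel"
      using assms(3) psiD_borel by auto
    show "disjoint_family_on (\<lambda>k. E \<inter> Ps ` DD N \<alpha> \<beta> k) {..<?H}"
      unfolding disjoint_family_on_def
    proof (intro ballI impI)
      fix k1 k2 assume k: "k1 \<in> {..<?H}" "k2 \<in> {..<?H}" "k1 \<noteq> k2"
      show "E \<inter> Ps ` DD N \<alpha> \<beta> k1 \<inter> (E \<inter> Ps ` DD N \<alpha> \<beta> k2) = {}"
        using psiD_level[of k1 N _ \<alpha> \<beta>] psiD_level[of k2 N _ \<alpha> \<beta>] level_unique[OF sc] k by blast
    qed
    show "emeasure lborel (E \<inter> Ps ` DD N \<alpha> \<beta> k) \<noteq> \<infinity>" if "k \<in> {..<?H}" for k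
    proof (rule bounded_fin)
      have "Ps ` DD N \<alpha> \<beta> k \<subseteq> susp_space FF"
      proof
        fix y assume "y \<in> Ps ` DD N \<alpha> \<beta> k"
        then obtain x u where xu: "(x, u) \<in> DD N \<alpha> \<beta> k" "y = Ps (x, u)" by auto
        have "sg (Suc k) \<le> sg ?H" using that by (intro sig_mono[OF sc qpos pq]) simp
        then have "0 \<le> x" "x < stair_width r N" "0 \<le> u" "u < sg ?H"
          using xu(1) sg_nonneg[of k] unfolding DD_def by auto
        then show "y \<in> susp_space FF" using psi_in[OF sc qpos pq] xu(2) by blast
      qed
      then show "bounded (E \<inter> Ps ` DD N \<alpha> \<beta> k)" using S_bounded bounded_subset by blast
    qed
  qed simp
  finally show ?thesis .
qed

end

lemma LBmono:
  fixes A B :: "(real\<times>real) set"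
  assumes "A \<in> sets borel" "B \<in> sets borel" "bounded B" "A \<subseteq> B"
  shows "measure lborel A \<le> measure lborel B"
proof -
  have "emeasure lborel B < \<infinity>" using emeasure_bounded_finite[OF assms(3)] .
  then have "B \<in> fmeasurable lborel" using assms(2) by (intro fmeasurableI) auto
  then show ?thesis using assms by (intro measure_mono_fmeasurable) auto
qed

lemma LBmono1:
  fixes A B :: "real set"
  assumes "A \<in> sets borel" "B \<in> sets borel" "bounded B" "A \<subseteq> B"
  shows "measure lborel A \<le> measure lborel B"
proof -
  have "emeasure lborel B < \<infinity>" using emeasure_bounded_finite[OF assms(3)] .
  then have "B \<in> fmeasurable lborel" using assms(2) by (intro fmeasurableI) auto
  then show ?thesis using assms by (intro measure_mono_fmeasurable) auto
qed

context
  fixes r :: "nat \<Rightarrow> nat" and p q :: real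
  assumes sc: "staircase_seq r" and qpos: "q > 0" and pq: "p > q"
begin

lemmas QQ_eq = QQ_def[OF sc qpos pq]

abbreviation "tau N \<equiv> sg r p q (stair_height r N)"

definition "UU N = (\<Union>j<stair_height r N. {stair_level r N j..<stair_level r N j + stair_width r N})"

lemma S_borel: "susp_space (FF r p q) \<in> sets borel"
proof -
  have [measurable]: "fst \<in> borel_measurable (borel :: (real \<times> real) measure)"
    "snd \<in> borel_measurable (borel :: (real \<times> real) measure)"
    using fst_meas[OF sc qpos pq] snd_meas[OF sc qpos pq] .
  have [measurable]: "(\<lambda>z::real\<times>real. FF r p q (fst z)) \<in> borel_measurable borel"
    using fst_meas[OF sc qpos pq] f_meas[OF sc qpos pq] by (rule measurable_compose)
  have "susp_space (FF r p q) = {z. 0 \<le> fst z \<and> fst z < 1 \<and> 0 \<le> snd z \<and> snd z < FF r p q (fst z)}"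
    unfolding susp_space_def by auto
  also have "\<dots> \<in> sets borel" by measurable
  finally show ?thesis .
qed

lemma psiQ_sub:
  assumes "0 \<le> \<alpha>" "\<beta> \<le> tau N"
  shows "Ps r p q ` QQ r N \<alpha> \<beta> \<subseteq> susp_space (FF r p q)"
proof
  fix y assume "y \<in> Ps r p q ` QQ r N \<alpha> \<beta>"
  then obtain x u where xu: "(x, u) \<in> QQ r N \<alpha> \<beta>" "y = Ps r p q (x, u)" by auto
  then have "0 \<le> x" "x < stair_width r N" "0 \<le> u" "u < tau N" using assms unfolding QQ_eq by auto
  then show "y \<in> susp_space (FF r p q)" using psi_in[OF sc qpos pq] xu(2) by blast
qed

lemma psiQ_area:
  assumes "0 \<le> \<alpha>" "\<alpha> \<le> \<beta>" "\<beta> \<le> tau N"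
  shows "measure lborel (Ps r p q ` QQ r N \<alpha> \<beta>) = stair_width r N * (\<beta> - \<alpha>)"
proof -
  have "measure lborel (Ps r p q -` UNIV \<inter> QQ r N \<alpha> \<beta>) = measure lborel (UNIV \<inter> Ps r p q ` QQ r N \<alpha> \<beta>)"
    using psiQ_measure[OF sc qpos pq assms(1,3), of UNIV] by simp
  moreover have "emeasure lborel (QQ r N \<alpha> \<beta>) = ennreal (stair_width r N) * ennreal (\<beta> - \<alpha>)"
    unfolding QQ_eq using measure_rect[of "{0..<stair_width r N}" "{\<alpha>..<\<beta>}"] w_pos[OF sc, of N] assms
    by simp
  then have "measure lborel (QQ r N \<alpha> \<beta>) = stair_width r N * (\<beta> - \<alpha>)"
    unfolding measure_def using w_pos[OF sc, of N] assms by (simp add: ennreal_mult[symmetric])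
  ultimately show ?thesis by simp
qed

lemma U_borel: "UU N \<in> sets borel"
  unfolding UU_def by auto

lemma U_sub: "UU N \<subseteq> {0..<1}"
  unfolding UU_def using inv[OF sc] s_le1[OF sc, of N] by fastforce

lemma U_measure: "measure lborel (UU N) = stair_spacer_start r (Suc N)"
proof -
  have "measure lborel (UU N) = (\<Sum>j<stair_height r N. measure lborel {stair_level r N j..<stair_level r N j + stair_width r N})"
    unfolding UU_def
  proof (rule measure_finite_Union)
    show "disjoint_family_on (\<lambda>j. {stair_level r N j..<stair_level r N j + stair_width r N}) {..<stair_height r N}"
      unfolding disjoint_family_on_def
    proof (intro ballI impI)
      fix i j assume "i \<in> {..<stair_height r N}" "j \<in> {..<stair_height r N}" "i \<noteq> j"
      then show "{stair_level r N i..<stair_level r N i + stair_width r N} \<inter> {stair_level r N j..<stair_level r N j + stair_width r N} = {}"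
        using disj[OF sc, of i N j] by auto
    qed
  qed (use w_pos[OF sc, of N] in \<open>auto simp: emeasure_lborel_Ico\<close>)
  also have "\<dots> = real (stair_height r N) * stair_width r N"
    using w_pos[OF sc, of N] by simp
  finally show ?thesis using hw[OF sc] by simp
qed

lemma cover_sub: "susp_space (FF r p q) - Ps r p q ` QQ r N 0 (tau N) \<subseteq> ({0..<1} - UU N) \<times> {0..<p}"
proof
  fix z assume z: "z \<in> susp_space (FF r p q) - Ps r p q ` QQ r N 0 (tau N)"
  obtain x y where xy: "z = (x, y)" by (cases z)
  have S: "(x, y) \<in> susp_space (FF r p q)" using z xy by simp
  have xU: "x \<notin> UU N"
  proof
    assume "x \<in> UU N"
    then obtain k where k: "in_stair_level r N k x" unfolding UU_def in_stair_level_def by auto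
    obtain x0 u where "0 \<le> x0" "x0 < stair_width r N" "0 \<le> u" "u < tau N" "Ps r p q (x0, u) = (x, y)"
      using psi_cover[OF sc qpos pq S k] by blast
    then have "z \<in> Ps r p q ` QQ r N 0 (tau N)" unfolding xy QQ_eq by force
    then show False using z by simp
  qed
  have "x \<in> {0..<1}" "0 \<le> y" "y < p" using S f_le[OF sc qpos pq, of x] unfolding susp_space_def by auto
  then show "z \<in> ({0..<1} - UU N) \<times> {0..<p}" using xU xy by simp
qed

lemma gap_bound: "measure lborel (susp_space (FF r p q) - Ps r p q ` QQ r N 0 (tau N)) \<le> (1 - stair_spacer_start r (Suc N)) * p"
proof -
  have tau0: "0 \<le> tau N" using sg_nonneg[OF sc qpos pq] by simp
  have B1: "({0..<1} - UU N) \<times> {0..<p} \<in> sets borel" using U_borel by (intro rect_borel) auto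
  have "measure lborel (susp_space (FF r p q) - Ps r p q ` QQ r N 0 (tau N)) \<le> measure lborel (({0..<1} - UU N) \<times> {0..<(p::real)})"
  proof (rule LBmono[OF _ B1 _ cover_sub])
    show "susp_space (FF r p q) - Ps r p q ` QQ r N 0 (tau N) \<in> sets borel"
      using S_borel psiQ_borel[OF sc qpos pq order.refl order.refl] by auto
    have "({0..<1} - UU N) \<times> {0..<p} \<subseteq> cbox (0, 0) (1, p)" unfolding cbox_Pair_eq by auto
    then show "bounded (({0..<1} - UU N) \<times> {0..<p})" by (rule bounded_subset[OF bounded_cbox])
  qed
  also have "\<dots> = measure lborel ({0..<1} - UU N) * p"
  proof -
    have "measure lborel ({0..<1::real} - UU N) = 1 - stair_spacer_start r (Suc N)"
      using measure_Diff[of lborel "{0..<1::real}" "UU N"] U_borel U_sub U_measure by simp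
    moreover have "emeasure lborel (({0..<1} - UU N) \<times> {0..<p}) = emeasure lborel ({0..<1::real} - UU N) * emeasure lborel {0..<p}"
      using U_borel by (intro measure_rect) auto
    ultimately show ?thesis using pq qpos s_le1[OF sc, of N]
      by (simp add: measure_def enn2real_mult)
  qed
  also have "\<dots> = (1 - stair_spacer_start r (Suc N)) * p"
    using measure_Diff[of lborel "{0..<1::real}" "UU N"] U_borel U_sub U_measure by simp
  finally show ?thesis .
qed

end

context
  fixes r :: "nat \<Rightarrow> nat" and p q :: real
  assumes sc: "staircase_seq r" and qpos: "q > 0" and pq: "p > q"
begin

lemmas QQ_eq' = QQ_def[OF sc qpos pq]

abbreviation "Phi t \<equiv> susp_flow (TR r) (FF r p q) t"
abbreviation "SS \<equiv> susp_space (FF r p q)"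

lemma phi_psi: "t \<ge> 0 \<Longrightarrow> Phi t (Ps r p q (x, u)) = Ps r p q (x, u + t)"
proof -
  assume t: "t \<ge> 0"
  have "Phi (t + 0) (x, u) = Phi t (Phi 0 (x, u))"
    by (rule flow_comp[where T="TR r" and f="FF r p q" and c=q, OF f_ge[OF sc qpos pq] qpos t])
  moreover have "Phi t (x, u) = Ps r p q (x, u + t)"
    by (rule flow_shift[where T="TR r" and f="FF r p q" and c=q, OF f_ge[OF sc qpos pq] qpos])
  ultimately show ?thesis by simp
qed

lemma w_le: "stair_width r N \<le> 1 / real (Suc N)"
proof -
  have "real (stair_height r N) * stair_width r N \<le> 1" using hw[OF sc, of N] s_le1[OF sc, of N] by simp
  moreover have "real (Suc N) \<le> real (stair_height r N)" using h_ge[OF sc, of N] by simp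
  moreover have "stair_width r N > 0" using w_pos[OF sc] by simp
  ultimately have "real (Suc N) * stair_width r N \<le> 1"
    by (meson dual_order.trans mult_right_mono less_imp_le)
  then show ?thesis by (simp add: field_simps)
qed

lemma w_lim: "(\<lambda>N. stair_width r N) \<longlonglongrightarrow> 0"
proof (rule tendsto_sandwich[of "\<lambda>_. 0" _ _ "\<lambda>N. 1 / real (Suc N)"])
  show "\<forall>\<^sub>F N in sequentially. 0 \<le> stair_width r N" using w_pos[OF sc] by (simp add: less_imp_le)
  show "\<forall>\<^sub>F N in sequentially. stair_width r N \<le> 1 / real (Suc N)" using w_le by simp
  show "(\<lambda>N. 1 / real (Suc N)) \<longlonglongrightarrow> 0" using LIMSEQ_inverse_real_of_nat by (simp add: inverse_eq_divide)
qed simp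

lemma tau_ge: "tau r p q N \<ge> real (Suc N) * q"
proof -
  have "tau r p q N \<ge> real (stair_height r N) * q" using sig_ge[OF sc qpos pq] by blast
  moreover have "real (Suc N) * q \<le> real (stair_height r N) * q" using h_ge[OF sc, of N] qpos by simp
  ultimately show ?thesis by linarith
qed

lemma eps_lim: "(\<lambda>N. (1 - stair_spacer_start r (Suc N)) * p) \<longlonglongrightarrow> 0"
proof -
  have "(\<lambda>N. (1 - stair_spacer_start r (Suc N)) * p) \<longlonglongrightarrow> (1 - 1) * p"
    by (intro tendsto_intros s_lim[OF sc])
  then show ?thesis by simp
qed

lemma psiQ_bor: "0 \<le> \<alpha> \<Longrightarrow> \<beta> \<le> tau r p q N \<Longrightarrow> Ps r p q ` QQ r N \<alpha> \<beta> \<in> sets borel"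
  by (rule psiQ_borel[OF sc qpos pq])

lemma core_bound:
  assumes t: "0 \<le> t" "t \<le> tau r p q N" and X: "X \<in> sets borel" and B: "B \<in> sets borel"
    and XB: "\<And>x u. Ps r p q (x, u) \<in> X \<longleftrightarrow> Ps r p q (x, u + t) \<in> B"
  shows "\<bar>measure lborel (X \<inter> SS) - measure lborel (B \<inter> SS)\<bar> \<le>
     stair_width r N * t + (1 - stair_spacer_start r (Suc N)) * p"
proof -
  let ?\<tau> = "tau r p q N" and ?w = "stair_width r N" and ?e = "(1 - stair_spacer_start r (Suc N)) * p"
  let ?P = "Ps r p q" and ?Q = "QQ r N"
  let ?Qa = "?P ` ?Q 0 (?\<tau> - t)" and ?Qb = "?P ` ?Q (?\<tau> - t) ?\<tau>"
  let ?Qc = "?P ` ?Q 0 t" and ?Qd = "?P ` ?Q t ?\<tau>"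
  let ?G = "SS - ?P ` ?Q 0 ?\<tau>"
  have tau0: "0 \<le> ?\<tau>" using sg_nonneg[OF sc qpos pq] by simp
  have Sb: "SS \<in> sets borel" by (rule S_borel[OF sc qpos pq])
  have Sbd: "bounded SS" by (rule S_bounded[OF sc qpos pq])
  have bQa: "?Qa \<in> sets borel" "?Qb \<in> sets borel" "?Qc \<in> sets borel" "?Qd \<in> sets borel"
    using psiQ_bor t tau0 by auto
  have bG: "?G \<in> sets borel" using Sb psiQ_bor[of 0 ?\<tau>] by auto
  have sQ: "?Qa \<subseteq> SS" "?Qb \<subseteq> SS" "?Qc \<subseteq> SS" "?Qd \<subseteq> SS"
    using psiQ_sub[OF sc qpos pq] t tau0 by auto
  have areab: "measure lborel ?Qb = ?w * t" "measure lborel ?Qc = ?w * t"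
    using psiQ_area[OF sc qpos pq, of "?\<tau> - t" ?\<tau> N] psiQ_area[OF sc qpos pq, of 0 t N] t by auto
  have gap: "measure lborel ?G \<le> ?e" by (rule gap_bound[OF sc qpos pq])
  have splitQ: "?Q 0 ?\<tau> = ?Q 0 (?\<tau> - t) \<union> ?Q (?\<tau> - t) ?\<tau>" "?Q 0 ?\<tau> = ?Q 0 t \<union> ?Q t ?\<tau>"
    unfolding QQ_eq' using t by auto
  have preX: "?P -` X \<inter> ?Q 0 (?\<tau> - t) = (+) (0, t) -` (?P -` B \<inter> ?Q t ?\<tau>)"
  proof (intro set_eqI)
    fix z :: "real \<times> real"
    obtain x u where z: "z = (x, u)" by (cases z)
    have e: "(0, t) + (x, u) = (x, u + t)" by simp
    show "z \<in> ?P -` X \<inter> ?Q 0 (?\<tau> - t) \<longleftrightarrow> z \<in> (+) (0, t) -` (?P -` B \<inter> ?Q t ?\<tau>)"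
      unfolding z vimage_def e using XB[of x u] t unfolding QQ_eq' by (auto simp: add.commute[of u t])
  qed
  have borPB: "?P -` B \<inter> ?Q t ?\<tau> \<in> sets borel"
    using measurable_sets[OF psi_meas[OF sc qpos pq] B] Q_borel[OF sc qpos pq] by auto
  have e1: "measure lborel (X \<inter> ?Qa) = measure lborel (B \<inter> ?Qd)"
  proof -
    have "measure lborel (X \<inter> ?Qa) = measure lborel (?P -` X \<inter> ?Q 0 (?\<tau> - t))"
      using psiQ_measure[OF sc qpos pq _ _ X, of 0 "?\<tau> - t" N] t by simp
    also have "\<dots> = measure lborel (?P -` B \<inter> ?Q t ?\<tau>)"
      unfolding preX measure_def using measure_translate[OF borPB, of "(0, t)"] by simp
    also have "\<dots> = measure lborel (B \<inter> ?Qd)"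
      using psiQ_measure[OF sc qpos pq _ _ B, of t ?\<tau> N] t by simp
    finally show ?thesis .
  qed
  have upper: "measure lborel (Y \<inter> SS) \<le> measure lborel (Y \<inter> A1) + ?w * t + ?e"
    if Y: "Y \<in> sets borel" and A1: "A1 \<in> sets borel" "A1 \<subseteq> SS" and A2: "A2 \<in> sets borel" "A2 \<subseteq> SS"
      "measure lborel A2 = ?w * t" and cov: "SS \<subseteq> A1 \<union> A2 \<union> ?G" for Y A1 A2
  proof -
    have "measure lborel (Y \<inter> SS) \<le> measure lborel ((Y \<inter> A1) \<union> A2 \<union> ?G)"
      using Y A1 A2 Sb Sbd bG cov by (intro LBmono) (auto intro: bounded_subset[OF Sbd])
    also have "\<dots> \<le> measure lborel ((Y \<inter> A1) \<union> A2) + measure lborel ?G"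
      using Y A1 A2 bG by (intro measure_Un_le) auto
    also have "\<dots> \<le> measure lborel (Y \<inter> A1) + measure lborel A2 + measure lborel ?G"
      using Y A1 A2 measure_Un_le[of "Y \<inter> A1" lborel A2] by auto
    finally show ?thesis using A2(3) gap by linarith
  qed
  have lower: "measure lborel (Y \<inter> A1) \<le> measure lborel (Y \<inter> SS)"
    if Y: "Y \<in> sets borel" and A1: "A1 \<in> sets borel" "A1 \<subseteq> SS" for Y A1
    using Y A1 Sb by (intro LBmono) (auto intro: bounded_subset[OF Sbd])
  have covX: "SS \<subseteq> ?Qa \<union> ?Qb \<union> ?G" using splitQ(1) by blast
  have covB: "SS \<subseteq> ?Qd \<union> ?Qc \<union> ?G" using splitQ(2) by blast
  have "measure lborel (X \<inter> SS) \<le> measure lborel (X \<inter> ?Qa) + ?w * t + ?e"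
    using upper[OF X bQa(1) sQ(1) bQa(2) sQ(2) areab(1) covX] .
  moreover have "measure lborel (B \<inter> SS) \<le> measure lborel (B \<inter> ?Qd) + ?w * t + ?e"
    using upper[OF B bQa(4) sQ(4) bQa(3) sQ(3) areab(2) covB] .
  moreover have "measure lborel (X \<inter> ?Qa) \<le> measure lborel (X \<inter> SS)" using lower[OF X bQa(1) sQ(1)] .
  moreover have "measure lborel (B \<inter> ?Qd) \<le> measure lborel (B \<inter> SS)" using lower[OF B bQa(4) sQ(4)] .
  ultimately show ?thesis using e1 by linarith
qed

lemma mp_core:
  assumes t: "0 \<le> t" and B: "B \<in> sets borel"
  shows "measure lborel (Phi t -` B \<inter> SS) = measure lborel (B \<inter> SS)"
proof -
  let ?X = "Phi t -` B"
  have X: "?X \<in> sets borel" using measurable_sets[OF flow_meas[OF sc qpos pq] B] by simp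
  have XB: "Ps r p q (x, u) \<in> ?X \<longleftrightarrow> Ps r p q (x, u + t) \<in> B" for x u
    using phi_psi[OF t] by simp
  let ?d = "\<bar>measure lborel (?X \<inter> SS) - measure lborel (B \<inter> SS)\<bar>"
  have lim: "(\<lambda>N. stair_width r N * t + (1 - stair_spacer_start r (Suc N)) * p) \<longlonglongrightarrow> 0 * t + 0"
    by (intro tendsto_intros w_lim eps_lim)
  obtain N0 :: nat where N0: "t / q \<le> real N0" using real_arch_simple by blast
  have ev: "\<exists>N0. \<forall>N\<ge>N0. ?d \<le> stair_width r N * t + (1 - stair_spacer_start r (Suc N)) * p"
  proof (intro exI allI impI)
    fix N assume "N0 \<le> N"
    then have "t / q \<le> real (Suc N)" using N0 by linarith
    then have "t \<le> real (Suc N) * q" using qpos by (simp add: divide_le_eq)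
    then have "t \<le> tau r p q N" using tau_ge[of N] by linarith
    then show "?d \<le> stair_width r N * t + (1 - stair_spacer_start r (Suc N)) * p"
      using core_bound[OF t _ X B XB] by blast
  qed
  have "?d \<le> 0 * t + 0" using LIMSEQ_le_const[OF lim ev] .
  then show ?thesis by simp
qed

end

context
  fixes r :: "nat \<Rightarrow> nat" and p q :: real
  assumes sc: "staircase_seq r" and qpos: "q > 0" and pq: "p > q"
begin

abbreviation "MM \<equiv> susp_measure (FF r p q)"

lemma MM_space: "space MM = UNIV"
  unfolding susp_measure_def by simp

lemma MM_sets: "sets MM = sets borel"
  unfolding susp_measure_def by simp

lemma SS_borel: "SS r p q \<in> sets borel" by (rule S_borel[OF sc qpos pq])

lemma SS_fin: "emeasure lborel (SS r p q) = ennreal (measure lborel (SS r p q))"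
proof -
  have "emeasure lborel (SS r p q) < \<infinity>" using emeasure_bounded_finite[OF S_bounded[OF sc qpos pq]] .
  then show ?thesis by (intro emeasure_eq_ennreal_measure) auto
qed

lemma LS_pos: "measure lborel (SS r p q) > 0"
proof -
  have a: "0 < stair_a r" "stair_a r \<le> 1" using a_pos[OF sc] a_le1[OF sc] by auto
  have sub: "{0..<stair_a r} \<times> {0..<q} \<subseteq> SS r p q"
    unfolding susp_space_def two_wise_roof_def using a pq by auto
  have "emeasure lborel ({0..<stair_a r} \<times> {0..<q}) = ennreal (stair_a r) * ennreal q"
    using measure_rect[of "{0..<stair_a r}" "{0..<q}"] a qpos by simp
  then have "measure lborel ({0..<stair_a r} \<times> {0..<q}) = stair_a r * q"
    unfolding measure_def using a qpos by (simp add: ennreal_mult[symmetric])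
  moreover have "measure lborel ({0..<stair_a r} \<times> {0..<q}) \<le> measure lborel (SS r p q)"
    using sub SS_borel S_bounded[OF sc qpos pq] by (intro LBmono rect_borel) auto
  moreover have "stair_a r * q > 0" using a qpos by simp
  ultimately show ?thesis by linarith
qed

lemma MM_emeasure: "B \<in> sets borel \<Longrightarrow> emeasure MM B = emeasure lborel (SS r p q \<inter> B) / emeasure lborel (SS r p q)"
  unfolding susp_measure_def using SS_borel by (intro emeasure_uniform_measure) auto

lemma sub_fin: "A \<subseteq> SS r p q \<Longrightarrow> emeasure lborel A = ennreal (measure lborel A)"
proof -
  assume "A \<subseteq> SS r p q"
  then have "emeasure lborel A < \<infinity>"
    using emeasure_bounded_finite[OF bounded_subset[OF S_bounded[OF sc qpos pq]]] by blast
  then show ?thesis by (intro emeasure_eq_ennreal_measure) auto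
qed

lemma MM_measure: "B \<in> sets borel \<Longrightarrow> measure MM B = measure lborel (SS r p q \<inter> B) / measure lborel (SS r p q)"
proof -
  assume B: "B \<in> sets borel"
  have "emeasure MM B = ennreal (measure lborel (SS r p q \<inter> B)) / ennreal (measure lborel (SS r p q))"
    using MM_emeasure[OF B] SS_fin sub_fin[of "SS r p q \<inter> B"] by simp
  also have "\<dots> = ennreal (measure lborel (SS r p q \<inter> B) / measure lborel (SS r p q))"
    using LS_pos by (intro divide_ennreal) auto
  finally show ?thesis unfolding measure_def using LS_pos by simp
qed

lemma MM_prob: "emeasure MM (space MM) = 1"
  unfolding MM_space using MM_emeasure[of UNIV] SS_fin LS_pos by (simp add: divide_ennreal[symmetric])

lemma MM_mp: "t \<ge> 0 \<Longrightarrow> measure_preserving_map MM (Phi r p q t)"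
proof -
  assume t: "t \<ge> 0"
  have meas: "Phi r p q t \<in> measurable MM MM"
    using flow_meas[OF sc qpos pq, of t] by (simp add: measurable_cong_sets[OF MM_sets MM_sets])
  have "distr MM MM (Phi r p q t) = MM"
  proof (rule measure_eqI)
    show "sets (distr MM MM (Phi r p q t)) = sets MM" by simp
  next
    fix A assume "A \<in> sets (distr MM MM (Phi r p q t))"
    then have A: "A \<in> sets borel" using MM_sets by simp
    have pre: "Phi r p q t -` A \<in> sets borel"
      using measurable_sets[OF flow_meas[OF sc qpos pq] A] by simp
    have "emeasure (distr MM MM (Phi r p q t)) A = emeasure MM (Phi r p q t -` A \<inter> space MM)"
      using A MM_sets meas by (intro emeasure_distr) auto
    also have "\<dots> = emeasure lborel (SS r p q \<inter> Phi r p q t -` A) / emeasure lborel (SS r p q)"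
      unfolding MM_space using MM_emeasure[OF pre] by simp
    also have "emeasure lborel (SS r p q \<inter> Phi r p q t -` A) = emeasure lborel (SS r p q \<inter> A)"
    proof -
      have "measure lborel (Phi r p q t -` A \<inter> SS r p q) = measure lborel (A \<inter> SS r p q)"
        using mp_core[OF sc qpos pq t A] .
      then show ?thesis using sub_fin[of "SS r p q \<inter> Phi r p q t -` A"] sub_fin[of "SS r p q \<inter> A"]
        by (simp add: Int_commute)
    qed
    also have "emeasure lborel (SS r p q \<inter> A) / emeasure lborel (SS r p q) = emeasure MM A"
      using MM_emeasure[OF A] by simp
    finally show "emeasure (distr MM MM (Phi r p q t)) A = emeasure MM A" .
  qed
  then show ?thesis unfolding measure_preserving_map_def using meas by simp
qed

lemma MM_null: "UNIV - SS r p q \<in> null_sets MM"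
proof -
  have "UNIV - SS r p q \<in> sets borel" using SS_borel by auto
  moreover then have "emeasure MM (UNIV - SS r p q) = 0" using MM_emeasure by simp
  ultimately show ?thesis using MM_sets by (simp add: null_sets_def)
qed

lemma MM_id: "AE z in MM. Phi r p q 0 z = z"
proof (rule AE_I'[OF MM_null])
  show "{z \<in> space MM. \<not> Phi r p q 0 z = z} \<subseteq> UNIV - SS r p q"
  proof
    fix z assume z: "z \<in> {z \<in> space MM. \<not> Phi r p q 0 z = z}"
    obtain x y where xy: "z = (x, y)" by (cases z)
    have "z \<notin> SS r p q"
    proof
      assume "z \<in> SS r p q"
      then have "0 \<le> y" "y < FF r p q x" unfolding xy susp_space_def by auto
      then have "Phi r p q 0 z = z" unfolding xy
        by (rule flow_zero_id[where T="TR r" and f="FF r p q" and c=q, OF f_ge[OF sc qpos pq] qpos])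
      then show False using z by simp
    qed
    then show "z \<in> UNIV - SS r p q" by simp
  qed
qed

lemma MM_comp: "s \<ge> 0 \<Longrightarrow> AE z in MM. Phi r p q (s + t) z = Phi r p q s (Phi r p q t z)"
  by (intro AE_I2 flow_comp[where T="TR r" and f="FF r p q" and c=q, OF f_ge[OF sc qpos pq] qpos])

end

context
  fixes r :: "nat \<Rightarrow> nat" and p q :: real
  assumes sc: "staircase_seq r" and qpos: "q > 0" and pq: "p > q"
begin

definition "XX n = tau r p q n * 2 ^ n / q"
definition "hh n = nat \<lceil>XX n\<rceil>"
definition "tt n = tau r p q n / real (hh n)"

lemmas QQ_eq2 = QQ_def[OF sc qpos pq]

lemma tau_q: "tau r p q n \<ge> q"
  using tau_ge[OF sc qpos pq, of n] qpos by (smt (verit) mult_le_cancel_right1 of_nat_0_le_iff of_nat_Suc)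

lemma XX_ge1: "XX n \<ge> 1"
proof -
  have "(2::real) ^ n \<ge> 1" by simp
  moreover have "q \<le> tau r p q n" by (rule tau_q)
  ultimately have "tau r p q n * 2 ^ n \<ge> q * 1" using qpos by (intro mult_mono) auto
  then show ?thesis unfolding XX_def using qpos by (simp add: le_divide_eq)
qed

lemma hh_bounds: "XX n \<le> real (hh n)" "real (hh n) \<le> 2 * XX n" "hh n \<ge> 1"
proof -
  show a: "XX n \<le> real (hh n)" unfolding hh_def by linarith
  have "real (hh n) < XX n + 1" unfolding hh_def using XX_ge1[of n] by linarith
  then show "real (hh n) \<le> 2 * XX n" using XX_ge1[of n] by linarith
  show "hh n \<ge> 1" using a XX_ge1[of n] by linarith
qed

lemma tt_upper: "tt n \<le> q / 2 ^ n"
proof -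
  have "tau r p q n / real (hh n) \<le> tau r p q n / XX n"
    using hh_bounds(1)[of n] XX_ge1[of n] tau_q[of n] qpos by (intro divide_left_mono) auto
  also have "\<dots> = q / 2 ^ n" unfolding XX_def using tau_q[of n] qpos by (simp add: field_simps)
  finally show ?thesis unfolding tt_def .
qed

lemma tt_lower: "q / 2 ^ Suc n \<le> tt n"
proof -
  have "q / 2 ^ Suc n = tau r p q n / (2 * XX n)" unfolding XX_def using tau_q[of n] qpos by (simp add: field_simps)
  also have "\<dots> \<le> tau r p q n / real (hh n)"
    using hh_bounds[of n] XX_ge1[of n] tau_q[of n] qpos by (intro divide_left_mono) auto
  finally show ?thesis unfolding tt_def .
qed

lemma tt_pos: "tt n > 0"
  using tt_lower[of n] qpos by (smt (verit) divide_pos_pos zero_less_power)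

lemma hh_tt: "real (hh n) * tt n = tau r p q n"
  unfolding tt_def using hh_bounds(3)[of n] by simp

lemma tau_mono: "tau r p q n \<le> tau r p q (Suc n)"
proof -
  have "stair_height r n \<le> stair_height r (Suc n)"
  proof -
    have "stair_height r (Suc n) \<ge> r (Suc n) * stair_height r n" by simp
    moreover have "r (Suc n) * stair_height r n \<ge> stair_height r n" using r_Suc_ge2[OF sc, of n] by simp
    ultimately show ?thesis by linarith
  qed
  then show ?thesis by (rule sig_mono[OF sc qpos pq])
qed

lemma tt_dec: "decseq tt"
proof (rule decseq_SucI)
  fix n
  have "tt (Suc n) \<le> q / 2 ^ Suc n" by (rule tt_upper)
  also have "\<dots> \<le> tt n" by (rule tt_lower)
  finally show "tt (Suc n) \<le> tt n" .
qed

lemma hh_inc: "incseq hh"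
proof (rule incseq_SucI)
  fix n
  have "XX n \<le> XX (Suc n)"
  proof -
    have "tau r p q n * 2 ^ n \<le> tau r p q (Suc n) * 2 ^ Suc n"
      using tau_mono[of n] tau_q[of n] tau_q[of "Suc n"] qpos by (intro mult_mono) auto
    then show ?thesis unfolding XX_def using qpos by (simp add: divide_right_mono)
  qed
  then show "hh n \<le> hh (Suc n)" unfolding hh_def by (intro nat_mono ceiling_mono)
qed

lemma tt_lim: "tt \<longlonglongrightarrow> 0"
proof (rule tendsto_sandwich[of "\<lambda>_. 0" _ _ "\<lambda>n. q * (1 / 2) ^ n"])
  show "\<forall>\<^sub>F n in sequentially. 0 \<le> tt n" using tt_pos by (simp add: less_imp_le)
  show "\<forall>\<^sub>F n in sequentially. tt n \<le> q * (1 / 2) ^ n" using tt_upper by (simp add: power_divide)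
  show "(\<lambda>n. q * (1 / 2) ^ n) \<longlonglongrightarrow> 0"
    using tendsto_mult[OF tendsto_const LIMSEQ_realpow_zero[of "1/2::real"]] by simp
qed simp

lemma htt_lim: "filterlim (\<lambda>n. real (hh n) * tt n) at_top sequentially"
proof -
  have "filterlim (\<lambda>n. q * real n) at_top sequentially"
    by (rule filterlim_tendsto_pos_mult_at_top[OF tendsto_const qpos filterlim_real_sequentially])
  moreover have "\<forall>\<^sub>F n in sequentially. q * real n \<le> real (hh n) * tt n"
  proof (rule always_eventually, rule allI)
    fix n
    have "q * real n \<le> real (Suc n) * q" using qpos by simp
    then show "q * real n \<le> real (hh n) * tt n" using hh_tt[of n] tau_ge[OF sc qpos pq, of n] by linarith
  qed
  ultimately show ?thesis by (rule filterlim_at_top_mono)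
qed

lemma img: "s \<ge> 0 \<Longrightarrow> L \<ge> 0 \<Longrightarrow> Phi r p q s ` QQ r n 0 L = Ps r p q ` QQ r n s (s + L)"
proof -
  assume s: "s \<ge> 0" and L: "L \<ge> 0"
  have fs: "Phi r p q s (x, u) = Ps r p q (x, u + s)" for x u
    by (rule flow_shift[where T="TR r" and f="FF r p q" and c=q, OF f_ge[OF sc qpos pq] qpos])
  show ?thesis
  proof
    show "Phi r p q s ` QQ r n 0 L \<subseteq> Ps r p q ` QQ r n s (s + L)"
    proof
      fix z assume "z \<in> Phi r p q s ` QQ r n 0 L"
      then obtain x u where xu: "(x, u) \<in> QQ r n 0 L" "z = Phi r p q s (x, u)" by auto
      then have "(x, u + s) \<in> QQ r n s (s + L)" unfolding QQ_eq2 by auto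
      then show "z \<in> Ps r p q ` QQ r n s (s + L)" using xu(2) fs by auto
    qed
  next
    show "Ps r p q ` QQ r n s (s + L) \<subseteq> Phi r p q s ` QQ r n 0 L"
    proof
      fix z assume "z \<in> Ps r p q ` QQ r n s (s + L)"
      then obtain x v where xv: "(x, v) \<in> QQ r n s (s + L)" "z = Ps r p q (x, v)" by auto
      then have "(x, v - s) \<in> QQ r n 0 L" unfolding QQ_eq2 by auto
      moreover have "Phi r p q s (x, v - s) = z" using fs[of x "v - s"] xv(2) by simp
      ultimately show "z \<in> Phi r p q s ` QQ r n 0 L" by force
    qed
  qed
qed

lemma img_k: "Phi r p q (real k * tt n) ` QQ r n 0 (tt n) = Ps r p q ` QQ r n (real k * tt n) (real (Suc k) * tt n)"
  using img[of "real k * tt n" "tt n" n] tt_pos[of n] by (simp add: algebra_simps)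

lemma slab_disj:
  assumes "k1 < hh n" "k2 < hh n" "k1 \<noteq> k2"
  shows "Ps r p q ` QQ r n (real k1 * tt n) (real (Suc k1) * tt n) \<inter>
         Ps r p q ` QQ r n (real k2 * tt n) (real (Suc k2) * tt n) = {}"
proof (rule ccontr)
  let ?Q1 = "QQ r n (real k1 * tt n) (real (Suc k1) * tt n)"
  let ?Q2 = "QQ r n (real k2 * tt n) (real (Suc k2) * tt n)"
  assume "\<not> Ps r p q ` ?Q1 \<inter> Ps r p q ` ?Q2 = {}"
  then obtain z where z1: "z \<in> Ps r p q ` ?Q1" and z2: "z \<in> Ps r p q ` ?Q2" by blast
  obtain w1 where w1: "w1 \<in> ?Q1" "z = Ps r p q w1" using z1 by blast
  obtain w2 where w2: "w2 \<in> ?Q2" "z = Ps r p q w2" using z2 by blast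
  obtain x1 u1 where e1: "w1 = (x1, u1)" by (cases w1)
  obtain x2 u2 where e2: "w2 = (x2, u2)" by (cases w2)
  have a: "(x1, u1) \<in> ?Q1" "(x2, u2) \<in> ?Q2" "Ps r p q (x1, u1) = Ps r p q (x2, u2)"
    using w1 w2 e1 e2 by auto
  have tp: "tt n > 0" by (rule tt_pos)
  have "real (Suc k1) \<le> real (hh n)" "real (Suc k2) \<le> real (hh n)" using assms by auto
  then have "real (Suc k1) * tt n \<le> tau r p q n" "real (Suc k2) * tt n \<le> tau r p q n"
    using hh_tt[of n] tp by (metis mult_right_mono less_imp_le)+
  then have "0 \<le> x1 \<and> x1 < stair_width r n \<and> 0 \<le> u1 \<and> u1 < tau r p q n"
            "0 \<le> x2 \<and> x2 < stair_width r n \<and> 0 \<le> u2 \<and> u2 < tau r p q n"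
  proof -
    have m: "0 \<le> real k1 * tt n" "0 \<le> real k2 * tt n" using tp by auto
    have "0 \<le> x1" "x1 < stair_width r n" "real k1 * tt n \<le> u1" "u1 < real (Suc k1) * tt n"
      using a(1) unfolding QQ_eq2 by auto
    moreover have "0 \<le> x2" "x2 < stair_width r n" "real k2 * tt n \<le> u2" "u2 < real (Suc k2) * tt n"
      using a(2) unfolding QQ_eq2 by auto
    ultimately show "0 \<le> x1 \<and> x1 < stair_width r n \<and> 0 \<le> u1 \<and> u1 < tau r p q n"
            "0 \<le> x2 \<and> x2 < stair_width r n \<and> 0 \<le> u2 \<and> u2 < tau r p q n"
      using m \<open>real (Suc k1) * tt n \<le> tau r p q n\<close> \<open>real (Suc k2) * tt n \<le> tau r p q n\<close> by linarith+
  qed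
  then have "u1 = u2" using psi_inj[OF sc qpos pq, of x1 n u1 x2 u2] a(3) by auto
  moreover have "k1 < k2 \<or> k2 < k1" using assms by auto
  then have "real (Suc k1) * tt n \<le> real k2 * tt n \<or> real (Suc k2) * tt n \<le> real k1 * tt n"
    using tp by (auto intro: mult_right_mono)
  ultimately show False using a(1,2) unfolding QQ_eq2 by auto
qed

lemma slab_cover: "(\<Union>k<hh n. Ps r p q ` QQ r n (real k * tt n) (real (Suc k) * tt n)) = Ps r p q ` QQ r n 0 (tau r p q n)"
proof -
  have tp: "tt n > 0" by (rule tt_pos)
  have "(\<Union>k<hh n. QQ r n (real k * tt n) (real (Suc k) * tt n)) = QQ r n 0 (tau r p q n)"
  proof
    show "(\<Union>k<hh n. QQ r n (real k * tt n) (real (Suc k) * tt n)) \<subseteq> QQ r n 0 (tau r p q n)"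
    proof
      fix z assume "z \<in> (\<Union>k<hh n. QQ r n (real k * tt n) (real (Suc k) * tt n))"
      then obtain k where k: "k < hh n" "z \<in> QQ r n (real k * tt n) (real (Suc k) * tt n)" by auto
      have "real (Suc k) * tt n \<le> real (hh n) * tt n" using k(1) tp by (intro mult_right_mono) auto
      moreover have "0 \<le> real k * tt n" using tp by simp
      moreover obtain x y where xy: "z = (x, y)" by (cases z)
      moreover have "0 \<le> x" "x < stair_width r n" "real k * tt n \<le> y" "y < real (Suc k) * tt n"
        using k(2) unfolding xy QQ_eq2 by auto
      ultimately have "0 \<le> x" "x < stair_width r n" "0 \<le> y" "y < tau r p q n" "z = (x, y)"
        using hh_tt[of n] by linarith+
      then show "z \<in> QQ r n 0 (tau r p q n)" unfolding QQ_eq2 by auto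
    qed
  next
    show "QQ r n 0 (tau r p q n) \<subseteq> (\<Union>k<hh n. QQ r n (real k * tt n) (real (Suc k) * tt n))"
    proof
      fix z assume z: "z \<in> QQ r n 0 (tau r p q n)"
      obtain x u where xu: "z = (x, u)" by (cases z)
      have u: "0 \<le> u" "u < real (hh n) * tt n" using z hh_tt[of n] unfolding xu QQ_eq2 by auto
      define k where "k = nat \<lfloor>u / tt n\<rfloor>"
      have k1: "real k \<le> u / tt n" "u / tt n < real k + 1" unfolding k_def using u tp by auto
      have "u / tt n < real (hh n)" using u tp by (simp add: divide_less_eq)
      then have kh: "k < hh n" using k1 by linarith
      have "real k * tt n \<le> u" "u < real (Suc k) * tt n"
        using k1 tp by (auto simp: le_divide_eq divide_less_eq algebra_simps)
      then have "z \<in> QQ r n (real k * tt n) (real (Suc k) * tt n)" using z unfolding xu QQ_eq2 by auto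
      then show "z \<in> (\<Union>k<hh n. QQ r n (real k * tt n) (real (Suc k) * tt n))" using kh by auto
    qed
  qed
  then show ?thesis by blast
qed

end

theorem lemma6p4:
  fixes r :: "nat \<Rightarrow> nat" and p q :: real
  assumes "staircase_seq r"
    and "p > q" and "q > 0"
    and "rationally_independent p q"
  shows "rank_one_flow (susp_measure (two_wise_roof r p q))
           (susp_flow (staircase_T r) (two_wise_roof r p q))"
proof -
  note sc = assms(1) and pq = assms(2) and qpos = assms(3)
  let ?M = "susp_measure (two_wise_roof r p q)"
  let ?\<phi> = "susp_flow (staircase_T r) (two_wise_roof r p q)"
  let ?A = "\<lambda>n. QQ r n 0 (tt r p q n)"
  let ?t = "tt r p q" and ?h = "hh r p q"
  let ?P = "Ps r p q"
  have img: "?\<phi> (real k * ?t n) ` ?A n = ?P ` QQ r n (real k * ?t n) (real (Suc k) * ?t n)" for k n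
    by (rule img_k[OF sc qpos pq])
  have tp: "?t n > 0" for n by (rule tt_pos[OF sc qpos pq])
  have bnd: "real (Suc k) * ?t n \<le> tau r p q n" if "k < ?h n" for k n
  proof -
    have "real (Suc k) \<le> real (?h n)" using that by simp
    then have "real (Suc k) * ?t n \<le> real (?h n) * ?t n" using tp[of n] by (intro mult_right_mono) auto
    then show ?thesis using hh_tt[OF sc qpos pq, of n] by simp
  qed
  have LS: "measure lborel (SS r p q) > 0" by (rule LS_pos[OF sc qpos pq])
  have tower: "\<exists>(A :: nat \<Rightarrow> (real \<times> real) set) (t :: nat \<Rightarrow> real) (h :: nat \<Rightarrow> nat).
        (\<forall>n. A n \<in> sets ?M) \<and>
        decseq t \<and> incseq h \<and>
        t \<longlonglongrightarrow> 0 \<and>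
        filterlim (\<lambda>n. real (h n) * t n) at_top sequentially \<and>
        (\<forall>n. \<forall>k<h n. ?\<phi> (real k * t n) ` A n \<in> sets ?M) \<and>
        (\<forall>n k1 k2. k1 < h n \<and> k2 < h n \<and> k1 \<noteq> k2 \<longrightarrow>
           measure ?M (?\<phi> (real k1 * t n) ` A n \<inter> ?\<phi> (real k2 * t n) ` A n) = 0) \<and>
        (\<lambda>n. measure ?M (space ?M - (\<Union>k<h n. ?\<phi> (real k * t n) ` A n))) \<longlonglongrightarrow> 0"
  proof (intro exI conjI)
    show "\<forall>n. ?A n \<in> sets ?M" using Q_borel[OF sc qpos pq] MM_sets[OF sc qpos pq] by auto
    show "decseq ?t" by (rule tt_dec[OF sc qpos pq])
    show "incseq ?h" by (rule hh_inc[OF sc qpos pq])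
    show "?t \<longlonglongrightarrow> 0" by (rule tt_lim[OF sc qpos pq])
    show "filterlim (\<lambda>n. real (?h n) * ?t n) at_top sequentially" by (rule htt_lim[OF sc qpos pq])
    show "\<forall>n. \<forall>k<?h n. ?\<phi> (real k * ?t n) ` ?A n \<in> sets ?M"
    proof (intro allI impI)
      fix n k assume k: "k < ?h n"
      have "0 \<le> real k * ?t n" using tp[of n] by simp
      then show "?\<phi> (real k * ?t n) ` ?A n \<in> sets ?M"
        unfolding img MM_sets[OF sc qpos pq] using psiQ_borel[OF sc qpos pq] bnd[OF k] by blast
    qed
    show "\<forall>n k1 k2. k1 < ?h n \<and> k2 < ?h n \<and> k1 \<noteq> k2 \<longrightarrow>
           measure ?M (?\<phi> (real k1 * ?t n) ` ?A n \<inter> ?\<phi> (real k2 * ?t n) ` ?A n) = 0"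
      unfolding img using slab_disj[OF sc qpos pq] by simp
    show "(\<lambda>n. measure ?M (space ?M - (\<Union>k<?h n. ?\<phi> (real k * ?t n) ` ?A n))) \<longlonglongrightarrow> 0"
    proof -
      have eq: "measure ?M (space ?M - (\<Union>k<?h n. ?\<phi> (real k * ?t n) ` ?A n)) =
          measure lborel (SS r p q - ?P ` QQ r n 0 (tau r p q n)) / measure lborel (SS r p q)" for n
      proof -
        have "space ?M - (\<Union>k<?h n. ?\<phi> (real k * ?t n) ` ?A n) = UNIV - ?P ` QQ r n 0 (tau r p q n)"
          unfolding img slab_cover[OF sc qpos pq] MM_space[OF sc qpos pq] ..
        moreover have "UNIV - ?P ` QQ r n 0 (tau r p q n) \<in> sets borel"
          using psiQ_borel[OF sc qpos pq, of 0 "tau r p q n" n] by auto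
        moreover have "SS r p q \<inter> (UNIV - ?P ` QQ r n 0 (tau r p q n)) = SS r p q - ?P ` QQ r n 0 (tau r p q n)"
          by blast
        ultimately show ?thesis using MM_measure[OF sc qpos pq] by simp
      qed
      have ub: "measure lborel (SS r p q - ?P ` QQ r n 0 (tau r p q n)) / measure lborel (SS r p q)
          \<le> (1 - stair_spacer_start r (Suc n)) * p / measure lborel (SS r p q)" for n
        using gap_bound[OF sc qpos pq, of n] LS by (intro divide_right_mono) auto
      have lim: "(\<lambda>n. (1 - stair_spacer_start r (Suc n)) * p / measure lborel (SS r p q)) \<longlonglongrightarrow> 0 / measure lborel (SS r p q)"
        by (intro tendsto_intros eps_lim[OF sc qpos pq]) (use LS in simp)
      show ?thesis unfolding eq
      proof (rule tendsto_sandwich[of "\<lambda>_. 0" _ _ "\<lambda>n. (1 - stair_spacer_start r (Suc n)) * p / measure lborel (SS r p q)"])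
        show "\<forall>\<^sub>F n in sequentially. 0 \<le> measure lborel (SS r p q - ?P ` QQ r n 0 (tau r p q n)) / measure lborel (SS r p q)"
          using LS by simp
        show "\<forall>\<^sub>F n in sequentially. measure lborel (SS r p q - ?P ` QQ r n 0 (tau r p q n)) / measure lborel (SS r p q)
           \<le> (1 - stair_spacer_start r (Suc n)) * p / measure lborel (SS r p q)"
          using ub by simp
        show "(\<lambda>n. (1 - stair_spacer_start r (Suc n)) * p / measure lborel (SS r p q)) \<longlonglongrightarrow> 0"
          using lim by simp
      qed simp
    qed
  qed
  show ?thesis unfolding rank_one_flow_def
  proof (intro conjI allI impI)
    show "emeasure ?M (space ?M) = 1" by (rule MM_prob[OF sc qpos pq])
    show "measure_preserving_map ?M (?\<phi> t)" if "t \<ge> 0" for t using MM_mp[OF sc qpos pq that] .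
    show "AE z in ?M. ?\<phi> 0 z = z" by (rule MM_id[OF sc qpos pq])
    show "AE z in ?M. ?\<phi> (s + t) z = ?\<phi> s (?\<phi> t z)" if "s \<ge> 0" for s t using MM_comp[OF sc qpos pq that] .
  qed (rule tower)
qed

end
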